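(* Let $G$ be a simple connected graph with $n$ vertices and $m$ edges, let $k\ge1$ be an integer, and let $S_{2k}(G)$ be the $2k$-parallel subdivision graph of $G$. Then the eigenvalues of the normalized Laplacian $\mathscr{L}(S_{2k}(G))$ are as follows. (i) If $\lambda\notin\{0,2\}$ is an eigenvalue of $\mathscr{L}(G)$ and $\mu_1,\mu_2,\mu_3$ are the roots of $4\mu^3-12\mu^2+9\mu-\lambda=0$, then $\mu_1,\mu_2,\mu_3$ are eigenvalues of $\mathscr{L}(S_{2k}(G))$, each with the same multiplicity as $\lambda$ has in $\mathscr{L}(G)$. (ii) $0$ is an eigenvalue of $\mathscr{L}(S_{2k}(G))$ with multiplicity $1$; if $G$ is bipartite, $2$ is an eigenvalue of $\mathscr{L}(S_{2k}(G))$ with multiplicity $1$. (iii) If $G$ is non-bipartite, then $\frac12$ and $\frac32$ are eigenvalues of $\mathscr{L}(S_{2k}(G))$ with multiplicities $km-n$ and $km-n+2$ respectively. (iv) If $G$ is bipartite, then $\frac12$ and $\frac32$ are eigenvalues of $\mathscr{L}(S_{2k}(G))$, both with multiplicity $km-n+2$.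
   Context: For a graph $H$ with adjacency matrix $A(H)$ and diagonal degree matrix $D(H)$ (no isolated vertices), the normalized Laplacian is $\mathscr{L}(H)=I-D(H)^{-1/2}A(H)D(H)^{-1/2}$. The $2k$-parallel subdivision graph $S_{2k}(G)$ is obtained from $G$ by replacing each edge $uv$ of $G$ by $k$ internally disjoint paths $u-w_1-w_2-v$ of length $3$ (each with its own two new internal vertices); thus $S_{2k}(G)$ has $n+2km$ vertices and $3km$ edges, each vertex $u\in V(G)$ has degree $k\,d_G(u)$ and each new vertex has degree $2$. *)

theory Defs
  imports "Jordan_Normal_Form.Char_Poly"
begin

definition simple_graph :: "'a set \<Rightarrow> ('a \<Rightarrow> 'a \<Rightarrow> bool) \<Rightarrow> bool" where
  "simple_graph V E \<longleftrightarrow> finite V \<and> (\<forall>u v. E u v \<longrightarrow> u \<in> V \<and> v \<in> V \<and> u \<noteq> v \<and> E v u)"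

definition connected_graph :: "'a set \<Rightarrow> ('a \<Rightarrow> 'a \<Rightarrow> bool) \<Rightarrow> bool" where
  "connected_graph V E \<longleftrightarrow> (\<forall>u\<in>V. \<forall>v\<in>V. E\<^sup>*\<^sup>* u v)"

definition bipartite :: "'a set \<Rightarrow> ('a \<Rightarrow> 'a \<Rightarrow> bool) \<Rightarrow> bool" where
  "bipartite V E \<longleftrightarrow> (\<exists>A \<subseteq> V. \<forall>u v. E u v \<longrightarrow> (u \<in> A \<longleftrightarrow> v \<notin> A))"

definition edge_set :: "('a \<Rightarrow> 'a \<Rightarrow> bool) \<Rightarrow> 'a set set" where
  "edge_set E = {{u, v} | u v. E u v}"

definition num_edges :: "('a \<Rightarrow> 'a \<Rightarrow> bool) \<Rightarrow> nat" where
  "num_edges E = card (edge_set E)"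

definition deg :: "'a set \<Rightarrow> ('a \<Rightarrow> 'a \<Rightarrow> bool) \<Rightarrow> 'a \<Rightarrow> nat" where
  "deg V E x = card {y \<in> V. E x y}"

definition nlap_mat :: "'a list \<Rightarrow> 'a set \<Rightarrow> ('a \<Rightarrow> 'a \<Rightarrow> bool) \<Rightarrow> real mat" where
  "nlap_mat vs V E = mat (length vs) (length vs)
     (\<lambda>(i, j). (if i = j then 1 else 0)
        - (if E (vs ! i) (vs ! j) then 1 / sqrt (real (deg V E (vs ! i)) * real (deg V E (vs ! j))) else 0))"

definition vertex_list :: "'a set \<Rightarrow> 'a list" where
  "vertex_list V = (SOME vs. distinct vs \<and> set vs = V)"

definition nlap :: "'a set \<Rightarrow> ('a \<Rightarrow> 'a \<Rightarrow> bool) \<Rightarrow> real mat" where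
  "nlap V E = nlap_mat (vertex_list V) V E"

text \<open>Multiplicity of mu as an eigenvalue of the normalized Laplacian:
  its multiplicity as a root of the characteristic polynomial (0 if not an eigenvalue).\<close>

definition nlap_mult :: "'a set \<Rightarrow> ('a \<Rightarrow> 'a \<Rightarrow> bool) \<Rightarrow> real \<Rightarrow> nat" where
  "nlap_mult V E \<mu> = order \<mu> (char_poly (nlap V E))"

text \<open>The 2k-parallel subdivision graph. For an edge uv of G and i < k, the i-th path
  replacing uv is  u - Mid u v i - Mid v u i - v.\<close>

datatype 'a sub_vertex = Orig 'a | Mid 'a 'a nat

definition sub_vertices :: "nat \<Rightarrow> 'a set \<Rightarrow> ('a \<Rightarrow> 'a \<Rightarrow> bool) \<Rightarrow> 'a sub_vertex set" where
  "sub_vertices k V E = Orig ` V \<union> {Mid u v i | u v i. E u v \<and> i < k}"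

fun sub_edge :: "nat \<Rightarrow> ('a \<Rightarrow> 'a \<Rightarrow> bool) \<Rightarrow> 'a sub_vertex \<Rightarrow> 'a sub_vertex \<Rightarrow> bool" where
  "sub_edge k E (Orig u) (Mid u' v i) \<longleftrightarrow> u = u' \<and> E u v \<and> i < k"
| "sub_edge k E (Mid u' v i) (Orig u) \<longleftrightarrow> u = u' \<and> E u v \<and> i < k"
| "sub_edge k E (Mid u v i) (Mid v' u' i') \<longleftrightarrow> u = u' \<and> v = v' \<and> i = i' \<and> E u v \<and> i < k"
| "sub_edge k E (Orig u) (Orig v) \<longleftrightarrow> False"

end

theory Submission
  imports Defs "Jordan_Normal_Form.Schur_Decomposition"
begin

lemma pcompose_power_left: "pcompose (p ^ r) f = (pcompose p f) ^ r"
  by (induction r) (auto simp: pcompose_mult)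

lemma order_power_gen:
  fixes g :: "real poly"
  assumes "g \<noteq> 0" shows "Polynomial.order a (g ^ r) = r * Polynomial.order a g"
  using assms by (induction r) (auto simp: order_mult)

lemma order_pcompose:
  fixes p f :: "real poly"
  assumes p0: "p \<noteq> 0" and df: "degree f \<ge> 1"
  shows "Polynomial.order a (pcompose p f) = Polynomial.order (poly f a) p * Polynomial.order a (f - [:poly f a:])"
proof -
  define b where "b = poly f a"
  define r where "r = Polynomial.order b p"
  obtain q where p: "p = [:-b,1:]^r * q" and nd: "\<not> [:-b,1:] dvd q"
    using order_decomp[OF p0, of b] unfolding r_def by blast
  have q0: "q \<noteq> 0" using nd by auto
  have lin: "pcompose [:-b,1:] f = f - [:b:]"
    by (rule poly_ext) (simp add: poly_pcompose)
  have fb0: "f - [:b:] \<noteq> 0"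
  proof
    assume "f - [:b:] = 0" then have "f = [:b:]" by simp
    with df show False by simp
  qed
  have qa: "poly (pcompose q f) a \<noteq> 0"
    using nd by (simp add: poly_pcompose b_def dvd_iff_poly_eq_0)
  have e: "pcompose p f = (f - [:b:])^r * pcompose q f"
    by (subst p) (simp only: pcompose_mult pcompose_power_left lin)
  have nz: "(f - [:b:])^r * pcompose q f \<noteq> 0" using fb0 qa by auto
  show ?thesis unfolding e b_def[symmetric] r_def[symmetric]
    using nz fb0 qa by (simp add: order_mult order_power_gen order_0I)
qed

lemma order_one_deriv:
  fixes p :: "real poly"
  assumes "poly p x = 0" "poly (pderiv p) x \<noteq> 0"
  shows "Polynomial.order x p = 1"
proof -
  have "p \<noteq> 0" using assms(2) by auto
  then show ?thesis using order_pderiv[OF _ assms(1)] assms(2) by (simp add: order_0I)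
qed

lemma order_two_deriv:
  fixes p :: "real poly"
  assumes "poly p x = 0" "poly (pderiv p) x = 0" "poly (pderiv (pderiv p)) x \<noteq> 0"
  shows "Polynomial.order x p = 2"
proof -
  have "pderiv p \<noteq> 0" using assms(3) by auto
  then have "p \<noteq> 0" by auto
  then show ?thesis using order_pderiv[OF _ assms(1)] order_one_deriv[OF assms(2,3)] by simp
qed

definition Fp :: "real poly" where "Fp = [:0, 9, -12, 4:]"
definition Dp :: "real poly" where "Dp = [:3, -8, 4:]"

lemma poly_Fp: "poly Fp x = 4*x^3 - 12*x^2 + 9*x"
  by (simp add: Fp_def algebra_simps power2_eq_square power3_eq_cube)
lemma poly_Dp: "poly Dp x = (2*x-1)*(2*x-3)"
  by (simp add: Dp_def algebra_simps)
lemma deg_Fp: "degree Fp = 3" by (simp add: Fp_def)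
lemma Dp0: "Dp \<noteq> 0" by (simp add: Dp_def)
lemma pderiv_Fp: "pderiv Fp = [:9, -24, 12:]"
  by (simp add: Fp_def pderiv_pCons)
lemma pderiv_Fp_c: "pderiv (Fp - [:c:]) = [:9, -24, 12:]"
  by (simp add: pderiv_diff pderiv_Fp pderiv_pCons)

lemma order_Dp: "Polynomial.order x Dp = (if x = 1/2 \<or> x = 3/2 then 1 else 0)"
proof (cases "x = 1/2 \<or> x = 3/2")
  case True
  have "Polynomial.order x Dp = 1"
  proof (rule order_one_deriv)
    show "poly Dp x = 0" using True by (auto simp: poly_Dp)
    have "pderiv Dp = [:-8, 8:]" by (simp add: Dp_def pderiv_pCons)
    then show "poly (pderiv Dp) x \<noteq> 0" using True by auto
  qed
  then show ?thesis using True by simp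
next
  case False
  then have "poly Dp x \<noteq> 0" by (auto simp: poly_Dp)
  then show ?thesis using False by (simp add: order_0I)
qed

lemma order_F_generic:
  assumes "x \<noteq> 1/2" "x \<noteq> 3/2"
  shows "Polynomial.order x (Fp - [:poly Fp x:]) = 1"
proof (rule order_one_deriv)
  show "poly (Fp - [:poly Fp x:]) x = 0" by simp
  have "12*x^2 - 24*x + 9 = 3*(2*x-1)*(2*x-3)" by (simp add: algebra_simps power2_eq_square)
  moreover have "3*(2*x-1)*(2*x-3) \<noteq> 0" using assms by auto
  ultimately show "poly (pderiv (Fp - [:poly Fp x:])) x \<noteq> 0"
    by (simp add: pderiv_Fp_c algebra_simps power2_eq_square)
qed

lemma order_F_half: "Polynomial.order (1/2) (Fp - [:poly Fp (1/2):]) = 2"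
  by (rule order_two_deriv) (simp_all add: pderiv_Fp_c pderiv_pCons)

lemma order_F_3half: "Polynomial.order (3/2) (Fp - [:poly Fp (3/2):]) = 2"
  by (rule order_two_deriv) (simp_all add: pderiv_Fp_c pderiv_pCons)

lemma Fp_vals: "poly Fp (1/2) = 2" "poly Fp (3/2) = 0" "poly Fp 0 = 0" "poly Fp 2 = 2"
  by (simp_all add: poly_Fp power2_eq_square power3_eq_cube)

lemma conj_real_vec: "conjugate (v :: real vec) = v"
  by (auto simp: conjugate_vec_def intro!: eq_vecI)

lemma sym_order0:
  fixes A :: "real mat"
  assumes A: "A \<in> carrier_mat n n"
    and no: "\<And>w. w \<in> carrier_vec n \<Longrightarrow> A *\<^sub>v w = lam \<cdot>\<^sub>v w \<Longrightarrow> w = 0\<^sub>v n"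
  shows "Polynomial.order lam (char_poly A) = 0"
proof -
  have "\<not> eigenvalue A lam"
    unfolding eigenvalue_def eigenvector_def using A no by auto
  then show ?thesis using eigenvalue_root_char_poly[OF A] by (simp add: order_0I)
qed

lemma sym_order1:
  fixes A :: "real mat"
  assumes A: "A \<in> carrier_mat n n" and sym: "\<And>i j. i < n \<Longrightarrow> j < n \<Longrightarrow> A $$ (i,j) = A $$ (j,i)"
    and v: "v \<in> carrier_vec n" and v0: "v \<noteq> 0\<^sub>v n" and ev: "A *\<^sub>v v = lam \<cdot>\<^sub>v v"
    and uniq: "\<And>w. w \<in> carrier_vec n \<Longrightarrow> A *\<^sub>v w = lam \<cdot>\<^sub>v w \<Longrightarrow> \<exists>c. w = c \<cdot>\<^sub>v v"
  shows "Polynomial.order lam (char_poly A) = 1"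
proof -
  have n: "n \<noteq> 0" using v v0 by auto
  define b where "b = basis_completion v"
  define ws where "ws = gram_schmidt n b"
  define W where "W = mat_of_cols n ws"
  define W' where "W' = corthogonal_inv W"
  define A' where "A' = W' * A * W"
  interpret cof_vec_space n "TYPE(real)" .
  from basis_completion[OF v v0, folded b_def]
  have span_b: "span (set b) = carrier_vec n" and dist_b: "distinct b" 
    and indep: "\<not> lin_dep (set b)" and b: "set b \<subseteq> carrier_vec n" and hdb: "hd b = v" 
    and len_b: "length b = n" by auto
  from hdb len_b n obtain vs where bv: "b = v # vs" by (cases b, auto)
  from gram_schmidt_result[OF b dist_b indep refl, folded ws_def]
  have ws: "set ws \<subseteq> carrier_vec n" "corthogonal ws" "length ws = n" 
    by (auto simp: len_b)
  from gram_schmidt_hd[OF v, of vs, folded bv] have hdws: "hd ws = v" unfolding ws_def .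
  have ws0: "ws ! 0 = v" using hdws ws(3) n by (cases ws) auto
  have orth_W: "corthogonal_mat W" using orthogonal_mat_of_cols ws unfolding W_def.
  have W: "W \<in> carrier_mat n n"
    using ws unfolding W_def using mat_of_cols_carrier(1)[of n ws] by auto
  have W': "W' \<in> carrier_mat n n" unfolding W'_def corthogonal_inv_def using W 
    by (auto simp: mat_of_rows_def)  
  from corthogonal_inv_result[OF orth_W] 
  have W'W: "inverts_mat W' W" unfolding W'_def .
  hence WW': "inverts_mat W W'" using mat_mult_left_right_inverse[OF W' W] W' W
    unfolding inverts_mat_def by auto
  have W'W1: "W' * W = 1\<^sub>m n" using W'W W' unfolding inverts_mat_def by auto
  have WW'1: "W * W' = 1\<^sub>m n" using WW' W unfolding inverts_mat_def by auto
  have A': "A' \<in> carrier_mat n n" using W W' A unfolding A'_def by auto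
  have A'A_wit: "similar_mat_wit A' A W' W"
    by (rule similar_mat_witI[of _ _ n], insert W W' A A' W'W WW', auto simp: A'_def
    inverts_mat_def)
  hence A'A: "similar_mat A' A" unfolding similar_mat_def by blast
  have col0: "col A' 0 = vec n (\<lambda> i. if i = 0 then lam else 0)"
    unfolding A'_def W'_def W_def
    using corthogonal_col_ev_0[OF A v v0 ev n hdws ws].
  have rowW'0: "row W' 0 = vec_inv v"
  proof -
    have c0: "ws ! 0 \<in> carrier_vec n" using ws n by auto
    have "row W' 0 = row (mat_of_rows n (map vec_inv ws)) 0"
      unfolding W'_def W_def corthogonal_inv_def using ws by simp
    also have "\<dots> = vec_inv (ws ! 0)"
      by (subst mat_of_rows_row) (use ws n c0 in auto)
    finally show ?thesis using ws0 by simp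
  qed
  have symT: "transpose_mat A = A"
    using A sym by (auto intro!: eq_matI)
  have row0: "A' $$ (0, j) = 0" if j: "j < n" "j \<noteq> 0" for j
  proof -
    have wj: "ws ! j \<in> carrier_vec n" using ws j by auto
    have "A' $$ (0,j) = (W' * (A * W)) $$ (0, j)" unfolding A'_def using W' A W
      by (simp add: assoc_mult_mat[of _ n n _ n _ n])
    also have "\<dots> = row W' 0 \<bullet> col (A * W) j" using W W' A j n by (subst index_mult_mat) auto
    also have "row W' 0 = vec_inv v" by (rule rowW'0)
    also have "col (A * W) j = A *\<^sub>v ws ! j" using A W j ws wj by (auto simp: W_def)
    also have "vec_inv v \<bullet> (A *\<^sub>v ws ! j) = 1 / (v \<bullet>c v) * (v \<bullet> (A *\<^sub>v ws ! j))"
      unfolding vec_inv_def conj_real_vec using v A wj by (simp add: smult_scalar_prod_distrib[of _ n])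
    also have "v \<bullet> (A *\<^sub>v ws ! j) = (transpose_mat A *\<^sub>v v) \<bullet> ws ! j"
      using transpose_vec_mult_scalar[OF A wj v] by simp
    also have "\<dots> = lam * (v \<bullet> ws ! j)" unfolding symT ev using v wj by simp
    also have "v \<bullet> ws ! j = 0"
      using corthogonalD[OF ws(2), of 0 j] j ws n ws0 by (simp add: conj_real_vec)
    finally show ?thesis by simp
  qed
  from A' n have dims: "dim_row A' = 1 + (n - 1)" "dim_col A' = 1 + (n - 1)" by auto
  obtain A1 A2 A0 A3 where sp: "split_block A' 1 1 = (A1,A2,A0,A3)"
    by (cases "split_block A' 1 1", auto)
  from split_block[OF sp dims] have A2: "A2 \<in> carrier_mat 1 (n-1)"
    and A3: "A3 \<in> carrier_mat (n-1) (n-1)" 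
    and A'block: "A' = four_block_mat A1 A2 A0 A3" by auto
  have A1id: "A1 = mat 1 1 (\<lambda> _. lam)"
    using sp[unfolded split_block_def Let_def] arg_cong[OF col0, of "\<lambda> v. v $ 0"] A' n
    by (auto simp: col_def)
  have A1: "A1 \<in> carrier_mat 1 1" unfolding A1id by auto
  {
    fix i
    assume "i < n - 1"
    with arg_cong[OF col0, of "\<lambda> v. v $ Suc i"] A'
    have "A' $$ (Suc i, 0) = 0" by auto
  } note A'0 = this
  have A0id: "A0 = 0\<^sub>m (n-1) 1"
    using sp[unfolded split_block_def Let_def] A'0 A' by auto
  have A2id: "A2 = 0\<^sub>m 1 (n-1)"
    using sp[unfolded split_block_def Let_def] row0 A' by auto
  have cpA: "char_poly A = char_poly A1 * char_poly A3"
    unfolding char_poly_similar[OF A'A, symmetric] A'block A0id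
    by (rule char_poly_four_block_zeros_col[OF A1 A2 A3])
  have cpA1: "char_poly A1 = [: -lam,1 :]"
    by (simp add: A1id char_poly_defs det_def sign_def)
  have noev: "\<not> eigenvalue A3 lam"
  proof
    assume "eigenvalue A3 lam"
    then obtain u where u: "u \<in> carrier_vec (n-1)" "u \<noteq> 0\<^sub>v (n-1)" "A3 *\<^sub>v u = lam \<cdot>\<^sub>v u"
      unfolding eigenvalue_def eigenvector_def using A3 by auto
    define y where "y = 0\<^sub>v 1 @\<^sub>v u"
    have y: "y \<in> carrier_vec n" using u n unfolding y_def carrier_vec_def by auto
    have Ay: "A' *\<^sub>v y = lam \<cdot>\<^sub>v y"
      unfolding A'block A0id A2id y_def
      by (subst mult_mat_vec_split[OF A1 A3 _ u(1)], simp, rule eq_vecI, insert u A1 A3, auto simp: A1id scalar_prod_def)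
    define z where "z = W *\<^sub>v y"
    have z: "z \<in> carrier_vec n" using W y unfolding z_def by auto
    have AW: "A * W = W * A'"
    proof -
      have "W * A' = (W * W') * A * W" unfolding A'_def using W W' A
        by (simp add: assoc_mult_mat[of _ n n _ n _ n])
      then show ?thesis using WW'1 A W by simp
    qed
    have "A *\<^sub>v z = lam \<cdot>\<^sub>v z"
    proof -
      have "A *\<^sub>v z = (A * W) *\<^sub>v y" unfolding z_def using A W y by simp
      also have "\<dots> = W *\<^sub>v (A' *\<^sub>v y)" unfolding AW using W A' y by simp
      also have "\<dots> = lam \<cdot>\<^sub>v z" unfolding Ay z_def using mult_mat_vec[OF W y] .
      finally show ?thesis .
    qed
    then obtain c where c: "z = c \<cdot>\<^sub>v v" using uniq z by blast
    have yz: "y = W' *\<^sub>v z" unfolding z_def using W W' y W'W1 by (simp add: assoc_mult_mat_vec[symmetric])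
    have "(W' *\<^sub>v v) $ 0 = 1"
    proof -
      have "(W' *\<^sub>v v) $ 0 = row W' 0 \<bullet> v" using W' n by auto
      also have "row W' 0 = vec_inv v" by (rule rowW'0)
      finally show ?thesis using vec_inv[OF v v0] by simp
    qed
    moreover have "y $ 0 = 0" unfolding y_def by simp
    moreover have "y = c \<cdot>\<^sub>v (W' *\<^sub>v v)" unfolding yz c using mult_mat_vec[OF W' v] .
    ultimately have "c = 0" using W' n by (metis index_smult_vec(1) dim_mult_mat_vec carrier_matD(1) mult_cancel_left1 neq0_conv mult_zero_right)
    then have "y = 0\<^sub>v n" using \<open>y = c \<cdot>\<^sub>v (W' *\<^sub>v v)\<close> W' v by auto
    then have "u = 0\<^sub>v (n-1)"
    proof (intro eq_vecI)
      fix i assume "y = 0\<^sub>v n" "i < dim_vec (0\<^sub>v (n - 1) :: real vec)"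
      then have i: "i < n - 1" by simp
      have "y $ (Suc i) = u $ i" unfolding y_def using i u(1) by simp
      then show "u $ i = 0\<^sub>v (n - 1) $ i" using \<open>y = 0\<^sub>v n\<close> i by simp
    qed (use u(1) in simp)
    with u(2) show False by simp
  qed
  have np: "poly (char_poly A3) lam \<noteq> 0" using noev eigenvalue_root_char_poly[OF A3] by simp
  then have "char_poly A3 \<noteq> 0" by auto
  moreover have "Polynomial.order lam [:-lam, 1:] = 1"
    using order_power_n_n[of lam 1] by simp
  moreover have nz: "[:-lam, 1:] * char_poly A3 \<noteq> 0"
    using \<open>char_poly A3 \<noteq> 0\<close> by (metis mult_eq_0_iff pCons_eq_0_iff one_neq_zero)
  ultimately show ?thesis unfolding cpA cpA1 order_mult[OF nz]
    using np by (simp add: order_0I)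
qed

lemma vertex_list_props: assumes "finite V" shows "distinct (vertex_list V) \<and> set (vertex_list V) = V"
  unfolding vertex_list_def by (rule someI_ex) (use finite_distinct_list[OF assms] in metis)

lemma sum_ind_card: "finite A \<Longrightarrow> (\<Sum>j\<in>A. if P j then (1::real) else 0) = real (card {j\<in>A. P j})"
  by (simp add: sum.inter_filter[symmetric])

lemma card_nth_filter:
  assumes "distinct xs"
  shows "card {j\<in>{..<length xs}. P (xs ! j)} = card {y\<in>set xs. P y}"
proof -
  have "(\<lambda>j. xs ! j) ` {j\<in>{..<length xs}. P (xs ! j)} = {y\<in>set xs. P y}"
    by (auto simp: in_set_conv_nth)
  moreover have "inj_on (\<lambda>j. xs ! j) {j\<in>{..<length xs}. P (xs ! j)}"
    using assms by (auto simp: inj_on_def nth_eq_iff_index_eq)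
  ultimately show ?thesis by (metis card_image)
qed

lemma quad_zero:
  fixes a :: "nat \<Rightarrow> nat \<Rightarrow> real" and d x :: "nat \<Rightarrow> real" and s :: real
  assumes sym: "\<And>i j. i < n \<Longrightarrow> j < n \<Longrightarrow> a i j = a j i"
    and nn: "\<And>i j. a i j \<ge> 0"
    and deg: "\<And>i. i < n \<Longrightarrow> d i = (\<Sum>j<n. a i j)"
    and eq: "\<And>i. i < n \<Longrightarrow> (\<Sum>j<n. a i j * x j) = s * d i * x i"
    and s: "s * s = 1"
    and ij: "i < n" "j < n"
  shows "a i j * (x i - s * x j)^2 = 0"
proof -
  have e1: "(\<Sum>i<n. \<Sum>j<n. a i j * (x i)^2) = (\<Sum>i<n. d i * (x i)^2)"
    by (rule sum.cong) (auto simp: deg sum_distrib_right)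
  have e2: "(\<Sum>i<n. \<Sum>j<n. a i j * (x j)^2) = (\<Sum>i<n. d i * (x i)^2)"
  proof -
    have "(\<Sum>i<n. \<Sum>j<n. a i j * (x j)^2) = (\<Sum>j<n. \<Sum>i<n. a i j * (x j)^2)" by (rule sum.swap)
    also have "\<dots> = (\<Sum>j<n. \<Sum>i<n. a j i * (x j)^2)" by (intro sum.cong refl) (auto simp: sym)
    finally show ?thesis using e1 by simp
  qed
  have e3: "(\<Sum>i<n. \<Sum>j<n. a i j * (x i * x j)) = s * (\<Sum>i<n. d i * (x i)^2)"
  proof -
    have "(\<Sum>i<n. \<Sum>j<n. a i j * (x i * x j)) = (\<Sum>i<n. x i * (\<Sum>j<n. a i j * x j))"
      by (intro sum.cong refl) (simp add: sum_distrib_left algebra_simps)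
    also have "\<dots> = (\<Sum>i<n. s * (d i * (x i)^2))" by (intro sum.cong refl) (simp add: eq power2_eq_square)
    finally show ?thesis by (simp add: sum_distrib_left)
  qed
  have "(\<Sum>i<n. \<Sum>j<n. a i j * (x i - s * x j)^2)
     = (\<Sum>i<n. \<Sum>j<n. a i j * (x i)^2) - 2 * s * (\<Sum>i<n. \<Sum>j<n. a i j * (x i * x j))
       + (s * s) * (\<Sum>i<n. \<Sum>j<n. a i j * (x j)^2)"
    by (simp add: sum_subtractf sum.distrib sum_distrib_left power2_eq_square algebra_simps)
  also have "\<dots> = 0" unfolding e1 e2 e3 using s by (simp add: algebra_simps)
  finally have tot: "(\<Sum>i<n. \<Sum>j<n. a i j * (x i - s * x j)^2) = 0" .
  have nn2: "\<And>i j. a i j * (x i - s * x j)^2 \<ge> 0" using nn by simp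
  have "\<forall>i\<in>{..<n}. (\<Sum>j<n. a i j * (x i - s * x j)^2) = 0"
    using tot by (subst sum_nonneg_eq_0_iff[symmetric]) (auto intro: sum_nonneg nn2)
  then have "(\<Sum>j<n. a i j * (x i - s * x j)^2) = 0" using ij by auto
  then show ?thesis using ij nn2 by (subst (asm) sum_nonneg_eq_0_iff) auto
qed

locale sgraph =
  fixes V :: "'a set" and E :: "'a \<Rightarrow> 'a \<Rightarrow> bool"
  assumes G: "simple_graph V E" and conn: "connected_graph V E" and two: "card V \<ge> 2"
begin

abbreviation "gl \<equiv> vertex_list V"
abbreviation "nn \<equiv> length gl"
abbreviation "dg u \<equiv> real (deg V E u)"

lemma finV: "finite V" using G by (simp add: simple_graph_def)
lemma Esym: "E u v \<Longrightarrow> E v u" using G by (simp add: simple_graph_def)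
lemma EV: "E u v \<Longrightarrow> u \<in> V \<and> v \<in> V" using G by (simp add: simple_graph_def)
lemma Eirr[simp]: "\<not> E u u" using G by (auto simp: simple_graph_def)
lemma gl: "distinct gl" "set gl = V" using vertex_list_props[OF finV] by auto
lemma nn_card: "nn = card V" using gl distinct_card by metis

lemma deg_pos: assumes u: "u \<in> V" shows "deg V E u > 0"
proof -
  obtain w where w: "w \<in> V" "w \<noteq> u"
  proof -
    have "\<not> V \<subseteq> {u}" using two card_mono[of "{u}" V] by auto
    then show ?thesis using that by auto
  qed
  have "E\<^sup>*\<^sup>* u w" using conn u w by (simp add: connected_graph_def)
  then obtain y where "E u y" using w(2) by (metis converse_rtranclpE)
  then have "y \<in> {y \<in> V. E u y}" using EV by auto
  moreover have "finite {y \<in> V. E u y}" using finV by auto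
  ultimately show ?thesis unfolding deg_def by (metis card_gt_0_iff empty_iff)
qed

lemma gl_nth_V: "i < nn \<Longrightarrow> gl ! i \<in> V" using gl by auto

lemma dg_pos: "i < nn \<Longrightarrow> dg (gl ! i) > 0" using deg_pos gl_nth_V by auto

lemma dg_sum: assumes i: "i < nn"
  shows "dg (gl ! i) = (\<Sum>j<nn. if E (gl ! i) (gl ! j) then 1 else 0)"
proof -
  have "(\<Sum>j<nn. if E (gl ! i) (gl ! j) then (1::real) else 0) = real (card {j\<in>{..<nn}. E (gl ! i) (gl ! j)})"
    by (rule sum_ind_card) simp
  also have "\<dots> = real (card {y\<in>set gl. E (gl ! i) y})" using card_nth_filter[OF gl(1)] by metis
  finally show ?thesis using gl by (simp add: deg_def)
qed

lemma nlap_carrier': "nlap V E \<in> carrier_mat nn nn" by (simp add: nlap_def nlap_mat_def)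

lemma nlap_entry: "i < nn \<Longrightarrow> j < nn \<Longrightarrow> nlap V E $$ (i,j) = (if i = j then 1 else 0)
   - (if E (gl!i) (gl!j) then 1 / (sqrt (dg (gl!i)) * sqrt (dg (gl!j))) else 0)"
  by (simp add: nlap_def nlap_mat_def real_sqrt_mult)

lemma nlap_sym: "i < nn \<Longrightarrow> j < nn \<Longrightarrow> nlap V E $$ (i,j) = nlap V E $$ (j,i)"
  by (auto simp: nlap_entry dest: Esym)

lemma nlap_mult_vec: assumes w: "w \<in> carrier_vec nn" and i: "i < nn"
  shows "(nlap V E *\<^sub>v w) $ i = w $ i - (\<Sum>j<nn. (if E (gl!i) (gl!j) then 1 else 0) * (w $ j / sqrt (dg (gl!j)))) / sqrt (dg (gl!i))"
proof -
  have "(nlap V E *\<^sub>v w) $ i = (\<Sum>j<nn. nlap V E $$ (i,j) * w $ j)"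
    using nlap_carrier' w i by (simp add: scalar_prod_def atLeast0LessThan)
  also have "\<dots> = (\<Sum>j<nn. (if i = j then w $ j else 0)
      - (if E (gl!i) (gl!j) then 1 else 0) * (w $ j / sqrt (dg (gl!j))) / sqrt (dg (gl!i)))"
    by (rule sum.cong) (auto simp: nlap_entry i)
  also have "\<dots> = w $ i - (\<Sum>j<nn. (if E (gl!i) (gl!j) then 1 else 0) * (w $ j / sqrt (dg (gl!j)))) / sqrt (dg (gl!i))"
    using i by (simp add: sum_subtractf sum_divide_distrib)
  finally show ?thesis .
qed

lemma eig_edge:
  assumes w: "w \<in> carrier_vec nn" and ev: "nlap V E *\<^sub>v w = (1 - s) \<cdot>\<^sub>v w" and s: "s * s = 1"
    and ij: "i < nn" "j < nn" and e: "E (gl!i) (gl!j)"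
  shows "w $ i / sqrt (dg (gl!i)) = s * (w $ j / sqrt (dg (gl!j)))"
proof -
  define x where "x j = w $ j / sqrt (dg (gl!j))" for j
  define a where "a i j = (if E (gl!i) (gl!j) then 1 else 0 :: real)" for i j
  have eq: "(\<Sum>j<nn. a i j * x j) = s * dg (gl!i) * x i" if i: "i < nn" for i
  proof -
    define q where "q = sqrt (dg (gl!i))"
    have q: "q > 0" "q * q = dg (gl!i)" using dg_pos[OF i] unfolding q_def by auto
    have "(nlap V E *\<^sub>v w) $ i = (1 - s) * w $ i" using ev w i by simp
    then have "w $ i - (\<Sum>j<nn. a i j * x j) / q = (1 - s) * w $ i"
      using nlap_mult_vec[OF w i] by (simp add: a_def x_def q_def)
    then have "(\<Sum>j<nn. a i j * x j) = s * w $ i * q" using q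
      by (simp add: field_simps)
    also have "w $ i = x i * q" using q unfolding x_def q_def by simp
    finally show ?thesis using q by (simp add: algebra_simps)
  qed
  have "a i j * (x i - s * x j)^2 = 0"
  proof (rule quad_zero[of nn a "\<lambda>i. dg (gl!i)" x s])
    show "\<And>i j. i < nn \<Longrightarrow> j < nn \<Longrightarrow> a i j = a j i" by (auto simp: a_def dest: Esym)
    show "\<And>i j. a i j \<ge> 0" by (simp add: a_def)
    show "\<And>i. i < nn \<Longrightarrow> dg (gl!i) = (\<Sum>j<nn. a i j)" using dg_sum by (simp add: a_def)
  qed (use eq s ij in auto)
  then have "x i = s * x j" using e by (simp add: a_def)
  then show ?thesis by (simp add: x_def)
qed

definition idx :: "'a \<Rightarrow> nat" where "idx u = (SOME i. i < nn \<and> gl ! i = u)"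

lemma idx: assumes "u \<in> V" shows "idx u < nn" "gl ! idx u = u"
proof -
  have "\<exists>i. i < nn \<and> gl ! i = u" using assms gl by (auto simp: in_set_conv_nth)
  then have "idx u < nn \<and> gl ! idx u = u" unfolding idx_def by (rule someI_ex)
  then show "idx u < nn" "gl ! idx u = u" by auto
qed

lemma idx_nth: assumes "i < nn" shows "idx (gl ! i) = i"
  using idx[OF gl_nth_V[OF assms]] assms gl(1) by (simp add: nth_eq_iff_index_eq)

definition XX :: "real vec \<Rightarrow> 'a \<Rightarrow> real" where "XX w u = w $ idx u / sqrt (dg u)"

lemma XX_edge:
  assumes w: "w \<in> carrier_vec nn" and ev: "nlap V E *\<^sub>v w = (1 - s) \<cdot>\<^sub>v w" and s: "s * s = 1"
    and e: "E u v"
  shows "XX w u = s * XX w v"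
proof -
  have uv: "u \<in> V" "v \<in> V" using EV[OF e] by auto
  show ?thesis using eig_edge[OF w ev s idx(1)[OF uv(1)] idx(1)[OF uv(2)]] e
    unfolding XX_def idx(2)[OF uv(1)] idx(2)[OF uv(2)] by simp
qed

lemma conn_const:
  assumes f: "\<And>u v. E u v \<Longrightarrow> f u = f v" and uv: "u \<in> V" "v \<in> V"
  shows "f u = f v"
proof -
  have "E\<^sup>*\<^sup>* u v" using conn uv by (simp add: connected_graph_def)
  then show ?thesis by (induction rule: rtranclp_induct) (auto dest: f)
qed

lemma nn_pos: "nn > 0" using nn_card two by simp

lemma w_from_XX: assumes w: "w \<in> carrier_vec nn" and i: "i < nn"
  shows "w $ i = sqrt (dg (gl!i)) * XX w (gl ! i)"
  using dg_pos[OF i] unfolding XX_def idx_nth[OF i] by simp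

definition v0 :: "real vec" where "v0 = vec nn (\<lambda>i. sqrt (dg (gl!i)))"

lemma ker0:
  assumes w: "w \<in> carrier_vec nn" and ev: "nlap V E *\<^sub>v w = 0 \<cdot>\<^sub>v w"
  shows "\<exists>c. w = c \<cdot>\<^sub>v v0"
proof -
  have ev': "nlap V E *\<^sub>v w = (1 - 1) \<cdot>\<^sub>v w" using ev by simp
  define c where "c = XX w (gl ! 0)"
  have "XX w u = c" if "u \<in> V" for u
    unfolding c_def by (rule conn_const[OF _ that gl_nth_V[OF nn_pos]]) (use XX_edge[OF w ev'] in auto)
  then have "w = c \<cdot>\<^sub>v v0"
  proof (intro eq_vecI)
    fix i assume "i < dim_vec (c \<cdot>\<^sub>v v0)"
    then have i: "i < nn" by (simp add: v0_def)
    have "w $ i = sqrt (dg (gl!i)) * XX w (gl!i)" by (rule w_from_XX[OF w i])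
    then show "w $ i = (c \<cdot>\<^sub>v v0) $ i" using i gl_nth_V[OF i] \<open>\<And>u. u \<in> V \<Longrightarrow> XX w u = c\<close>
      by (simp add: v0_def)
  qed (use w in \<open>simp add: v0_def\<close>)
  then show ?thesis by blast
qed

definition sg :: "'a set \<Rightarrow> 'a \<Rightarrow> real" where "sg P u = (if u \<in> P then 1 else -1)"
definition v2 :: "'a set \<Rightarrow> real vec" where "v2 P = vec nn (\<lambda>i. sg P (gl!i) * sqrt (dg (gl!i)))"

lemma ker2_bip:
  assumes P: "\<And>u v. E u v \<Longrightarrow> (u \<in> P \<longleftrightarrow> v \<notin> P)"
    and w: "w \<in> carrier_vec nn" and ev: "nlap V E *\<^sub>v w = 2 \<cdot>\<^sub>v w"
  shows "\<exists>c. w = c \<cdot>\<^sub>v v2 P"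
proof -
  have ev': "nlap V E *\<^sub>v w = (1 - (-1)) \<cdot>\<^sub>v w" using ev by simp
  define c where "c = XX w (gl ! 0) * sg P (gl ! 0)"
  have "XX w u * sg P u = c" if "u \<in> V" for u
    unfolding c_def
  proof (rule conn_const[OF _ that gl_nth_V[OF nn_pos]])
    fix u v assume e: "E u v"
    show "XX w u * sg P u = XX w v * sg P v"
      using XX_edge[OF w ev' _ e] P[OF e] by (auto simp: sg_def)
  qed
  then have "XX w u = c * sg P u" if "u \<in> V" for u
    using that by (force simp: sg_def)
  then have "w = c \<cdot>\<^sub>v v2 P"
  proof (intro eq_vecI)
    fix i assume "i < dim_vec (c \<cdot>\<^sub>v v2 P)"
    then have i: "i < nn" by (simp add: v2_def)
    have "w $ i = sqrt (dg (gl!i)) * XX w (gl!i)" by (rule w_from_XX[OF w i])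
    then show "w $ i = (c \<cdot>\<^sub>v v2 P) $ i" using i gl_nth_V[OF i] \<open>\<And>u. u \<in> V \<Longrightarrow> XX w u = c * sg P u\<close>
      by (simp add: v2_def)
  qed (use w in \<open>simp add: v2_def\<close>)
  then show ?thesis by blast
qed

lemma ker2_nonbip:
  assumes nb: "\<not> bipartite V E"
    and w: "w \<in> carrier_vec nn" and ev: "nlap V E *\<^sub>v w = 2 \<cdot>\<^sub>v w"
  shows "w = 0\<^sub>v nn"
proof (rule ccontr)
  assume w0: "w \<noteq> 0\<^sub>v nn"
  have ev': "nlap V E *\<^sub>v w = (1 - (-1)) \<cdot>\<^sub>v w" using ev by simp
  obtain i where i: "i < nn" "w $ i \<noteq> 0" using w0 w by (metis eq_vecI carrier_vecD index_zero_vec(1) index_zero_vec(2))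
  define c where "c = \<bar>XX w (gl ! i)\<bar>"
  have c: "c > 0" unfolding c_def using w_from_XX[OF w i(1)] i by auto
  have abs: "\<bar>XX w u\<bar> = c" if "u \<in> V" for u
    unfolding c_def
    by (rule conn_const[OF _ that gl_nth_V[OF i(1)]]) (use XX_edge[OF w ev'] in force)
  define P where "P = {u \<in> V. XX w u > 0}"
  have "bipartite V E"
    unfolding bipartite_def
  proof (intro exI[of _ P] conjI allI impI)
    show "P \<subseteq> V" unfolding P_def by auto
    fix u v assume e: "E u v"
    have uv: "u \<in> V" "v \<in> V" using EV[OF e] by auto
    have "XX w u = - XX w v" using XX_edge[OF w ev' _ e] by simp
    then show "u \<in> P \<longleftrightarrow> v \<notin> P" using abs[OF uv(1)] abs[OF uv(2)] c uv unfolding P_def by auto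
  qed
  with nb show False by simp
qed

lemma v0_ev: "nlap V E *\<^sub>v v0 = 0 \<cdot>\<^sub>v v0"
proof (rule eq_vecI)
  fix i assume "i < dim_vec (0 \<cdot>\<^sub>v v0)"
  then have i: "i < nn" by (simp add: v0_def)
  have v0c: "v0 \<in> carrier_vec nn" by (simp add: v0_def)
  have "(\<Sum>j<nn. (if E (gl!i) (gl!j) then 1 else 0) * (v0 $ j / sqrt (dg (gl!j))))
      = (\<Sum>j<nn. (if E (gl!i) (gl!j) then 1 else 0))"
    by (rule sum.cong) (auto simp: v0_def deg_pos gl_nth_V)
  also have "\<dots> = dg (gl!i)" using dg_sum[OF i] by simp
  finally show "(nlap V E *\<^sub>v v0) $ i = (0 \<cdot>\<^sub>v v0) $ i"
    unfolding nlap_mult_vec[OF v0c i] using i dg_pos[OF i] by (simp add: v0_def real_div_sqrt)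
qed (simp add: v0_def nlap_def nlap_mat_def)

lemma v2_ev:
  assumes P: "\<And>u v. E u v \<Longrightarrow> (u \<in> P \<longleftrightarrow> v \<notin> P)"
  shows "nlap V E *\<^sub>v v2 P = 2 \<cdot>\<^sub>v v2 P"
proof (rule eq_vecI)
  fix i assume "i < dim_vec (2 \<cdot>\<^sub>v v2 P)"
  then have i: "i < nn" by (simp add: v2_def)
  have v2c: "v2 P \<in> carrier_vec nn" by (simp add: v2_def)
  have "(\<Sum>j<nn. (if E (gl!i) (gl!j) then 1 else 0) * (v2 P $ j / sqrt (dg (gl!j))))
      = (\<Sum>j<nn. (if E (gl!i) (gl!j) then 1 else 0) * (- sg P (gl!i)))"
    by (rule sum.cong) (auto simp: v2_def deg_pos gl_nth_V sg_def dest: P)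
  also have "\<dots> = - sg P (gl!i) * dg (gl!i)" using dg_sum[OF i] by (simp add: sum_distrib_left[symmetric] sum_negf mult.commute)
  finally show "(nlap V E *\<^sub>v v2 P) $ i = (2 \<cdot>\<^sub>v v2 P) $ i"
    unfolding nlap_mult_vec[OF v2c i] using i dg_pos[OF i] by (simp add: v2_def real_div_sqrt times_divide_eq_right[symmetric] del: times_divide_eq_right)
qed (simp add: v2_def nlap_def nlap_mat_def)

lemma G_orders:
  shows "Polynomial.order 0 (char_poly (nlap V E)) = 1"
    "bipartite V E \<Longrightarrow> Polynomial.order 2 (char_poly (nlap V E)) = 1"
    "\<not> bipartite V E \<Longrightarrow> Polynomial.order 2 (char_poly (nlap V E)) = 0"
proof -
  have v0c: "v0 \<in> carrier_vec nn" by (simp add: v0_def)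
  have v00: "v0 \<noteq> 0\<^sub>v nn"
  proof
    assume "v0 = 0\<^sub>v nn"
    then have "v0 $ 0 = 0" using nn_pos by simp
    then show False using dg_pos[OF nn_pos] nn_pos by (simp add: v0_def)
  qed
  show "Polynomial.order 0 (char_poly (nlap V E)) = 1"
    by (rule sym_order1[OF nlap_carrier' nlap_sym v0c v00 v0_ev ker0]) auto
  show "Polynomial.order 2 (char_poly (nlap V E)) = 1" if b: "bipartite V E"
  proof -
    obtain P where P: "\<And>u v. E u v \<Longrightarrow> (u \<in> P \<longleftrightarrow> v \<notin> P)" using b unfolding bipartite_def by blast
    have v2c: "v2 P \<in> carrier_vec nn" by (simp add: v2_def)
    have v20: "v2 P \<noteq> 0\<^sub>v nn"
    proof
      assume "v2 P = 0\<^sub>v nn"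
      then have "v2 P $ 0 = 0" using nn_pos by simp
      then show False using dg_pos[OF nn_pos] nn_pos by (simp add: v2_def sg_def split: if_splits)
    qed
    show ?thesis
      by (rule sym_order1[OF nlap_carrier' nlap_sym v2c v20 v2_ev[OF P] ker2_bip[OF P]]) auto
  qed
  show "Polynomial.order 2 (char_poly (nlap V E)) = 0" if nb: "\<not> bipartite V E"
    by (rule sym_order0[OF nlap_carrier' ker2_nonbip[OF nb]]) auto
qed

end

fun prt :: "'a sub_vertex \<Rightarrow> 'a sub_vertex" where
  "prt (Orig u) = Orig u" | "prt (Mid u v i) = Mid v u i"

lemma prt_prt[simp]: "prt (prt a) = a" by (cases a) auto
lemma inj_prt: "inj prt" by (metis injI prt_prt)

locale sgk = sgraph V E for V :: "'a set" and E +
  fixes k :: nat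
  assumes k: "k \<ge> 1"
begin

abbreviation "SV \<equiv> sub_vertices k V E"
abbreviation "SE \<equiv> sub_edge k E"

definition Mids :: "'a sub_vertex set" where "Mids = {Mid u v i | u v i. E u v \<and> i < k}"
definition Mids1 :: "'a sub_vertex set" where "Mids1 = {Mid u v i | u v i. E u v \<and> i < k \<and> idx u < idx v}"

lemma SV_eq: "SV = Orig ` V \<union> Mids" by (simp add: sub_vertices_def Mids_def)

lemma idx_inj: "u \<in> V \<Longrightarrow> v \<in> V \<Longrightarrow> idx u = idx v \<Longrightarrow> u = v" by (metis idx(2))

lemma Mids_split: "Mids = Mids1 \<union> prt ` Mids1" "Mids1 \<inter> prt ` Mids1 = {}"
proof -
  show "Mids1 \<inter> prt ` Mids1 = {}" by (auto simp: Mids1_def)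
  have "Mids1 \<union> prt ` Mids1 \<subseteq> Mids" by (auto simp: Mids1_def Mids_def dest: Esym)
  moreover have "Mids \<subseteq> Mids1 \<union> prt ` Mids1"
  proof
    fix m assume "m \<in> Mids"
    then obtain u v i where m: "m = Mid u v i" "E u v" "i < k" by (auto simp: Mids_def)
    have uv: "u \<in> V" "v \<in> V" "u \<noteq> v" using EV[OF m(2)] m(2) by auto
    then have "idx u \<noteq> idx v" using idx_inj by blast
    then consider "idx u < idx v" | "idx v < idx u" by linarith
    then show "m \<in> Mids1 \<union> prt ` Mids1"
    proof cases
      case 1 then show ?thesis using m by (auto simp: Mids1_def)
    next
      case 2
      have "Mid v u i \<in> Mids1" using 2 m Esym by (auto simp: Mids1_def)
      moreover have "m = prt (Mid v u i)" using m by simp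
      ultimately show ?thesis by blast
    qed
  qed
  ultimately show "Mids = Mids1 \<union> prt ` Mids1" by blast
qed

lemma fin_Mids: "finite Mids"
proof -
  have "Mids \<subseteq> (\<lambda>(u,v,i). Mid u v i) ` (V \<times> V \<times> {..<k})"
  proof
    fix m assume "m \<in> Mids"
    then obtain u v i where m: "m = Mid u v i" "E u v" "i < k" by (auto simp: Mids_def)
    then show "m \<in> (\<lambda>(u,v,i). Mid u v i) ` (V \<times> V \<times> {..<k})"
      using EV[OF m(2)] by (auto intro!: image_eqI[of _ _ "(u,v,i)"])
  qed
  moreover have "finite ((\<lambda>(u,v,i). Mid u v i) ` (V \<times> V \<times> {..<k}))" using finV by auto
  ultimately show ?thesis by (rule finite_subset)
qed

lemma fin_Mids1: "finite Mids1" using fin_Mids Mids_split(1) by (metis finite_Un)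

lemma SE_Mid: "E u v \<Longrightarrow> i < k \<Longrightarrow> SE (Mid u v i) y \<longleftrightarrow> y = Orig u \<or> y = Mid v u i"
  by (cases y) auto

lemma SE_Orig: "SE (Orig u) y \<longleftrightarrow> (\<exists>v i. y = Mid u v i \<and> E u v \<and> i < k)"
  by (cases y) auto

lemma SE_sym: "SE a b \<Longrightarrow> SE b a"
  by (cases a; cases b) (auto dest: Esym)

lemma deg_Orig: assumes u: "u \<in> V" shows "deg SV SE (Orig u) = k * deg V E u"
proof -
  have "{y \<in> SV. SE (Orig u) y} = (\<lambda>(v,i). Mid u v i) ` ({v \<in> V. E u v} \<times> {..<k})"
    by (auto simp: SE_Orig SV_eq Mids_def dest: EV)
  moreover have "inj_on (\<lambda>(v,i). Mid u v i) ({v \<in> V. E u v} \<times> {..<k})"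
    by (auto simp: inj_on_def)
  ultimately have "deg SV SE (Orig u) = card ({v \<in> V. E u v} \<times> {..<k})"
    unfolding deg_def by (simp add: card_image)
  also have "\<dots> = k * deg V E u" using finV by (simp add: card_cartesian_product deg_def)
  finally show ?thesis .
qed

lemma deg_Mid: assumes m: "m \<in> Mids" shows "deg SV SE m = 2"
proof -
  obtain u v i where mm: "m = Mid u v i" "E u v" "i < k" using m by (auto simp: Mids_def)
  have "{y \<in> SV. SE m y} = {Orig u, Mid v u i}"
    using mm EV[OF mm(2)] Esym[OF mm(2)] by (auto simp: SE_Mid SV_eq Mids_def)
  then show ?thesis unfolding deg_def by simp
qed

lemma card_Mids1: "card Mids1 = k * num_edges E"
proof -
  define OE where "OE = {(u,v). E u v \<and> idx u < idx v}"
  have finOE: "finite OE"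
  proof -
    have "OE \<subseteq> V \<times> V" by (auto simp: OE_def dest: EV)
    then show ?thesis using finV by (metis finite_SigmaI finite_subset)
  qed
  have "Mids1 = (\<lambda>((u,v),i). Mid u v i) ` (OE \<times> {..<k})"
    by (auto simp: Mids1_def OE_def image_iff)
  moreover have "inj_on (\<lambda>((u,v),i). Mid u v i) (OE \<times> {..<k})"
    by (auto simp: inj_on_def)
  ultimately have c1: "card Mids1 = card OE * k"
    by (simp add: card_image card_cartesian_product)
  have "bij_betw (\<lambda>(u,v). {u,v}) OE (edge_set E)"
  proof (rule bij_betwI')
    fix x y assume "x \<in> OE" "y \<in> OE"
    then show "((case x of (u, v) \<Rightarrow> {u, v}) = (case y of (u, v) \<Rightarrow> {u, v})) = (x = y)"
      by (auto simp: OE_def doubleton_eq_iff)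
  next
    fix x assume "x \<in> OE" then show "(case x of (u, v) \<Rightarrow> {u, v}) \<in> edge_set E"
      by (auto simp: OE_def edge_set_def)
  next
    fix e assume "e \<in> edge_set E"
    then obtain u v where e: "e = {u,v}" "E u v" by (auto simp: edge_set_def)
    have uv: "u \<in> V" "v \<in> V" "u \<noteq> v" using EV[OF e(2)] e(2) by auto
    then have "idx u \<noteq> idx v" using idx_inj by blast
    then consider "idx u < idx v" | "idx v < idx u" by linarith
    then show "\<exists>x\<in>OE. e = (case x of (u, v) \<Rightarrow> {u, v})"
    proof cases
      case 1 then show ?thesis using e by (auto simp: OE_def)
    next
      case 2 then show ?thesis using e Esym[OF e(2)] by (auto simp: OE_def intro!: bexI[of _ "(v,u)"])
    qed
  qed
  then have "card OE = num_edges E" unfolding num_edges_def by (rule bij_betw_same_card)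
  then show ?thesis using c1 by simp
qed

definition l1 :: "'a sub_vertex list" where "l1 = vertex_list Mids1"
definition ml :: "'a sub_vertex list" where "ml = l1 @ map prt l1"
definition sl :: "'a sub_vertex list" where "sl = map Orig gl @ ml"
abbreviation "pp \<equiv> length l1"

lemma l1: "distinct l1" "set l1 = Mids1" using vertex_list_props[OF fin_Mids1] by (auto simp: l1_def)

lemma pp_card: "pp = k * num_edges E" using l1 card_Mids1 distinct_card by metis

lemma ml: "distinct ml" "set ml = Mids" "length ml = 2 * pp"
proof -
  show "distinct ml" unfolding ml_def using l1 Mids_split(2) inj_prt
    by (auto simp: distinct_map inj_on_subset[OF inj_prt])
  show "set ml = Mids" unfolding ml_def using l1 Mids_split(1) by auto
  show "length ml = 2 * pp" unfolding ml_def by simp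
qed

lemma sl: "distinct sl" "set sl = SV" "length sl = nn + 2 * pp"
proof -
  show "distinct sl" unfolding sl_def using ml gl
    by (auto simp: distinct_map Mids_def inj_on_def)
  show "set sl = SV" unfolding sl_def using ml gl SV_eq by auto
  show "length sl = nn + 2 * pp" unfolding sl_def using ml by simp
qed

end

lemma sum_delta_ind: "a < (N::nat) \<Longrightarrow> (\<Sum>l\<in>{0..<N}. (if l = a then 1 else 0) * (g l :: real)) = g a"
proof -
  assume a: "a < N"
  have "(\<Sum>l\<in>{0..<N}. (if l = a then 1 else 0) * (g l :: real)) = (\<Sum>l\<in>{0..<N}. if l = a then g l else 0)"
    by (rule sum.cong) auto
  also have "\<dots> = g a" using a by (subst sum.delta) auto
  finally show ?thesis .
qed

lemma sum_delta_ind': "a < (N::nat) \<Longrightarrow> (\<Sum>l\<in>{0..<N}. (g l :: real) * (if a = l then 1 else 0)) = g a"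
proof -
  assume a: "a < N"
  have "(\<Sum>l\<in>{0..<N}. (g l :: real) * (if a = l then 1 else 0)) = (\<Sum>l\<in>{0..<N}. if l = a then g l else 0)"
    by (rule sum.cong) auto
  also have "\<dots> = g a" using a by (subst sum.delta) auto
  finally show ?thesis .
qed

lemma charpoly_perm:
  fixes A B :: "real mat"
  assumes A: "A \<in> carrier_mat N N" and B: "B \<in> carrier_mat N N"
    and p: "\<And>i. i < N \<Longrightarrow> p i < N" and pinj: "\<And>i j. i < N \<Longrightarrow> j < N \<Longrightarrow> p i = p j \<Longrightarrow> i = j"
    and e: "\<And>i j. i < N \<Longrightarrow> j < N \<Longrightarrow> B $$ (i,j) = A $$ (p i, p j)"
  shows "char_poly B = char_poly A"
proof -
  define P where "P = mat N N (\<lambda>(i,j). if j = p i then 1 else (0::real))"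
  define Q where "Q = mat N N (\<lambda>(i,j). if i = p j then 1 else (0::real))"
  have P: "P \<in> carrier_mat N N" and Q: "Q \<in> carrier_mat N N" by (auto simp: P_def Q_def)
  have PQ: "P * Q = 1\<^sub>m N"
  proof (rule eq_matI)
    fix i j assume ij: "i < dim_row (1\<^sub>m N)" "j < dim_col (1\<^sub>m N)"
    then have ij': "i < N" "j < N" by auto
    have "(P * Q) $$ (i,j) = (\<Sum>l\<in>{0..<N}. (if l = p i then 1 else 0) * (if l = p j then 1 else 0))"
      using ij' by (simp add: P_def Q_def scalar_prod_def)
    also have "\<dots> = (if p i = p j then 1 else 0)" by (rule sum_delta_ind[OF p[OF ij'(1)]])
    also have "\<dots> = 1\<^sub>m N $$ (i,j)" using ij' pinj by auto
    finally show "(P * Q) $$ (i,j) = 1\<^sub>m N $$ (i,j)" .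
  qed (auto simp: P_def Q_def)
  have QP: "Q * P = 1\<^sub>m N" using mat_mult_left_right_inverse[OF P Q PQ] .
  have BPAQ: "B = P * A * Q"
  proof (rule eq_matI)
    fix i j assume ij: "i < dim_row (P * A * Q)" "j < dim_col (P * A * Q)"
    then have ij': "i < N" "j < N" using P Q by auto
    have PA: "(P * A) $$ (i, l) = A $$ (p i, l)" if l: "l < N" for l
    proof -
      have "(P * A) $$ (i, l) = (\<Sum>m\<in>{0..<N}. (if m = p i then 1 else 0) * A $$ (m, l))"
        using ij' l A by (simp add: P_def scalar_prod_def)
      also have "\<dots> = A $$ (p i, l)" by (rule sum_delta_ind[OF p[OF ij'(1)]])
      finally show ?thesis .
    qed
    have "(P * A * Q) $$ (i,j) = (\<Sum>l\<in>{0..<N}. (P * A) $$ (i, l) * (if l = p j then 1 else 0))"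
      using ij' A P Q by (simp add: Q_def scalar_prod_def)
    also have "\<dots> = (\<Sum>l\<in>{0..<N}. A $$ (p i, l) * (if p j = l then 1 else 0))"
      by (rule sum.cong) (auto simp: PA)
    also have "\<dots> = A $$ (p i, p j)" by (rule sum_delta_ind'[OF p[OF ij'(2)]])
    finally show "B $$ (i,j) = (P * A * Q) $$ (i,j)" using e ij' by simp
  qed (use A B P Q in auto)
  have "similar_mat_wit B A P Q"
    by (rule similar_mat_witI[OF PQ QP BPAQ B A P Q])
  then have "similar_mat B A" unfolding similar_mat_def by blast
  then show ?thesis by (rule char_poly_similar)
qed

lemma nlap_mat_perm:
  assumes d: "distinct vs" "distinct vs'" and s: "set vs = set vs'"
  shows "char_poly (nlap_mat vs X R) = char_poly (nlap_mat vs' X R)"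
proof -
  define N where "N = length vs"
  have N': "length vs' = N" unfolding N_def using d s by (metis distinct_card)
  define p where "p i = (SOME j. j < N \<and> vs' ! j = vs ! i)" for i
  have p: "p i < N \<and> vs' ! p i = vs ! i" if i: "i < N" for i
  proof -
    have "\<exists>j. j < N \<and> vs' ! j = vs ! i" using i s N' unfolding N_def
      by (metis in_set_conv_nth nth_mem)
    then show ?thesis unfolding p_def by (rule someI_ex)
  qed
  show ?thesis
  proof (rule charpoly_perm[of _ N _ p])
    show "nlap_mat vs' X R \<in> carrier_mat N N" using N' by (simp add: nlap_mat_def)
    show "nlap_mat vs X R \<in> carrier_mat N N" by (simp add: nlap_mat_def N_def)
    show "\<And>i. i < N \<Longrightarrow> p i < N" using p by blast
    show "\<And>i j. i < N \<Longrightarrow> j < N \<Longrightarrow> p i = p j \<Longrightarrow> i = j"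
      using p d(1) unfolding N_def by (metis nth_eq_iff_index_eq)
    show "\<And>i j. i < N \<Longrightarrow> j < N \<Longrightarrow> nlap_mat vs X R $$ (i, j) = nlap_mat vs' X R $$ (p i, p j)"
    proof -
      fix i j assume ij: "i < N" "j < N"
      have "(i = j) = (p i = p j)"
        using p[OF ij(1)] p[OF ij(2)] d(1) ij unfolding N_def by (metis nth_eq_iff_index_eq)
      then show "nlap_mat vs X R $$ (i, j) = nlap_mat vs' X R $$ (p i, p j)"
        using ij p[OF ij(1)] p[OF ij(2)] N' by (simp add: nlap_mat_def N_def)
    qed
  qed
qed

lemma schur_det:
  fixes P B C Q X :: "real mat"
  assumes P: "P \<in> carrier_mat n n" and B: "B \<in> carrier_mat n m" and C: "C \<in> carrier_mat m n"
    and Q: "Q \<in> carrier_mat m m" and X: "X \<in> carrier_mat m n" and QX: "Q * X = C"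
  shows "det (four_block_mat P B C Q) = det Q * det (P - B * X)"
proof -
  define M where "M = four_block_mat P B C Q"
  define N where "N = four_block_mat (1\<^sub>m n) (0\<^sub>m n m) (- X) (1\<^sub>m m)"
  have M: "M \<in> carrier_mat (n+m) (n+m)" using P Q unfolding M_def by auto
  have N: "N \<in> carrier_mat (n+m) (n+m)" unfolding N_def by auto
  have MN: "M * N = four_block_mat (P - B * X) B (0\<^sub>m m n) Q"
  proof -
    have X': "- X \<in> carrier_mat m n" using X by (rule uminus_carrier_mat)
    have e1: "P * 1\<^sub>m n + B * - X = P - B * X"
      using P B X by (simp add: minus_add_uminus_mat[of P n n "B * X"])
    have e2: "P * 0\<^sub>m n m + B * 1\<^sub>m m = B" using P B by simp
    have e3: "C * 1\<^sub>m n + Q * - X = 0\<^sub>m m n"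
    proof -
      have "C * 1\<^sub>m n + Q * - X = C + - C" using C Q X QX by simp
      also have "\<dots> = 0\<^sub>m m n" using C by (intro eq_matI) auto
      finally show ?thesis .
    qed
    have e4: "C * 0\<^sub>m n m + Q * 1\<^sub>m m = Q" using C Q by simp
    show ?thesis unfolding M_def N_def
      by (subst mult_four_block_mat[OF P B C Q one_carrier_mat zero_carrier_mat X' one_carrier_mat])
        (simp only: e1 e2 e3 e4)
  qed
  have dN: "det N = 1" unfolding N_def
    by (subst det_four_block_mat_upper_right_zero[of _ n _ m]) (use X in auto)
  have "det M = det (M * N)" using det_mult[OF M N] dN by simp
  also have "\<dots> = det (P - B * X) * det Q" unfolding MN
    by (rule det_four_block_mat_lower_left_zero) (use P B Q X in auto)
  finally show ?thesis unfolding M_def by simp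
qed

lemma sum_nth_set: "distinct xs \<Longrightarrow> (\<Sum>b\<in>{0..<length xs}. g (xs ! b)) = (\<Sum>z\<in>set xs. g z)"
  using sum.reindex_bij_betw[OF bij_betw_nth[OF _ refl refl], of xs g] by (simp add: atLeast0LessThan)

context sgk
begin

abbreviation "degS a \<equiv> real (deg SV SE a)"
definition NS :: "'a sub_vertex \<Rightarrow> 'a sub_vertex \<Rightarrow> real" where
  "NS a b = (if SE a b then 1 / sqrt (degS a * degS b) else 0)"

lemma NS_sym: "NS a b = NS b a" by (auto simp: NS_def mult.commute dest: SE_sym)
lemma NS_OO[simp]: "NS (Orig a) (Orig b) = 0" by (simp add: NS_def)

lemma NS_OM: assumes u: "u \<in> V" and m: "m \<in> Mids"
  shows "NS (Orig u) m = (if SE (Orig u) m then 1 / sqrt (2 * k * dg u) else 0)"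
  using deg_Orig[OF u] deg_Mid[OF m] by (simp add: NS_def mult.commute)

lemma NS_MM: assumes m: "m \<in> Mids" and m': "m' \<in> Mids"
  shows "NS m m' = (if m' = prt m then 1/2 else 0)"
proof -
  obtain u v i where mm: "m = Mid u v i" "E u v" "i < k" using m by (auto simp: Mids_def)
  have se: "SE m m' \<longleftrightarrow> m' = prt m" using m' mm by (auto simp: SE_Mid Mids_def)
  have s4: "sqrt (2 * 2) = (2::real)" by simp
  show ?thesis
  proof (cases "m' = prt m")
    case True
    then show ?thesis using se deg_Mid[OF m] deg_Mid[OF m'] s4 unfolding NS_def by simp
  next
    case False
    then show ?thesis using se unfolding NS_def by simp
  qed
qed

lemma prt_Mids: "m \<in> Mids \<Longrightarrow> prt m \<in> Mids" by (auto simp: Mids_def dest: Esym)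

lemma Tu: assumes u: "u \<in> V"
  shows "{m \<in> Mids. SE (Orig u) m} = (\<lambda>(v,i). Mid u v i) ` ({v \<in> V. E u v} \<times> {..<k})"
    "inj_on (\<lambda>(v,i). Mid u v i) ({v \<in> V. E u v} \<times> {..<k})"
  by (auto simp: SE_Orig Mids_def inj_on_def dest: EV)

lemma sum_Orig:
  assumes u: "u \<in> V"
  shows "(\<Sum>m\<in>Mids. NS (Orig u) m * g m) = (\<Sum>v\<in>{v \<in> V. E u v}. \<Sum>i<k. g (Mid u v i)) / sqrt (2 * k * dg u)"
proof -
  have "(\<Sum>m\<in>Mids. NS (Orig u) m * g m) = (\<Sum>m\<in>{m \<in> Mids. SE (Orig u) m}. NS (Orig u) m * g m)"
    using fin_Mids by (intro sum.mono_neutral_right) (auto simp: NS_def)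
  also have "\<dots> = (\<Sum>m\<in>{m \<in> Mids. SE (Orig u) m}. g m / sqrt (2 * k * dg u))"
    by (rule sum.cong) (auto simp: NS_OM[OF u])
  also have "\<dots> = (\<Sum>m\<in>{m \<in> Mids. SE (Orig u) m}. g m) / sqrt (2 * k * dg u)"
    by (simp add: sum_divide_distrib)
  also have "(\<Sum>m\<in>{m \<in> Mids. SE (Orig u) m}. g m) = (\<Sum>(v,i)\<in>{v \<in> V. E u v} \<times> {..<k}. g (Mid u v i))"
    unfolding Tu(1)[OF u] by (subst sum.reindex[OF Tu(2)[OF u]]) (simp add: case_prod_unfold)
  also have "\<dots> = (\<Sum>v\<in>{v \<in> V. E u v}. \<Sum>i<k. g (Mid u v i))"
    by (rule sum.cartesian_product[symmetric])
  finally show ?thesis .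
qed

lemma dg_card: "dg u = real (card {v \<in> V. E u v})" by (simp add: deg_def)

lemma SumA: assumes u: "u \<in> V" and w: "w \<in> V"
  shows "(\<Sum>m\<in>Mids. NS (Orig u) m * NS m (Orig w)) = (if u = w then 1/2 else 0)"
proof -
  have "(\<Sum>m\<in>Mids. NS (Orig u) m * NS m (Orig w))
    = (\<Sum>v\<in>{v \<in> V. E u v}. \<Sum>i<k. NS (Mid u v i) (Orig w)) / sqrt (2 * k * dg u)"
    by (rule sum_Orig[OF u])
  also have "\<dots> = (\<Sum>v\<in>{v \<in> V. E u v}. \<Sum>i<k. (if u = w then 1 / sqrt (2 * k * dg u) else 0)) / sqrt (2 * k * dg u)"
  proof -
    have "NS (Mid u v i) (Orig w) = (if u = w then 1 / sqrt (2 * k * dg u) else 0)"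
      if "v \<in> V" "E u v" "i < k" for v i
    proof -
      have mm: "Mid u v i \<in> Mids" using that by (auto simp: Mids_def)
      show ?thesis unfolding NS_sym[of "Mid u v i"] NS_OM[OF w mm] using that by auto
    qed
    then show ?thesis by (intro arg_cong[where f = "\<lambda>x. x / _"] sum.cong refl) auto
  qed
  also have "\<dots> = (if u = w then dg u * k / (sqrt (2 * k * dg u) * sqrt (2 * k * dg u)) else 0)"
    by (simp add: dg_card)
  also have "\<dots> = (if u = w then 1/2 else 0)"
  proof -
    have "dg u > 0" using deg_pos[OF u] by simp
    have "dg w > 0" using deg_pos[OF w] by simp
    moreover have "real k > 0" using k by simp
    ultimately have "sqrt (2 * k * dg u) * sqrt (2 * k * dg u) = 2 * k * dg u" by simp
    then show ?thesis using \<open>dg u > 0\<close> \<open>real k > 0\<close> by (cases "u = w") simp_all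
  qed
  finally show ?thesis .
qed

lemma SumB: assumes u: "u \<in> V" and w: "w \<in> V"
  shows "(\<Sum>m\<in>Mids. NS (Orig u) m * NS (prt m) (Orig w)) = (if E u w then 1 / (2 * sqrt (dg u) * sqrt (dg w)) else 0)"
proof -
  have "(\<Sum>m\<in>Mids. NS (Orig u) m * NS (prt m) (Orig w))
    = (\<Sum>v\<in>{v \<in> V. E u v}. \<Sum>i<k. NS (Mid v u i) (Orig w)) / sqrt (2 * k * dg u)"
    using sum_Orig[OF u, of "\<lambda>m. NS (prt m) (Orig w)"] by simp
  also have "\<dots> = (\<Sum>v\<in>{v \<in> V. E u v}. \<Sum>i<k. (if v = w then 1 / sqrt (2 * k * dg w) else 0)) / sqrt (2 * k * dg u)"
  proof -
    have "NS (Mid v u i) (Orig w) = (if v = w then 1 / sqrt (2 * k * dg w) else 0)"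
      if "v \<in> V" "E u v" "i < k" for v i
    proof -
      have mm: "Mid v u i \<in> Mids" using that Esym by (auto simp: Mids_def)
      show ?thesis unfolding NS_sym[of "Mid v u i"] NS_OM[OF w mm] using that Esym by auto
    qed
    then show ?thesis by (intro arg_cong[where f = "\<lambda>x. x / _"] sum.cong refl) auto
  qed
  also have "\<dots> = (if E u w then k / (sqrt (2 * k * dg w) * sqrt (2 * k * dg u)) else 0)"
  proof -
    have "(\<Sum>v\<in>{v \<in> V. E u v}. \<Sum>i<k. (if v = w then 1 / sqrt (2 * k * dg w) else 0))
      = (\<Sum>v\<in>{v \<in> V. E u v}. (if v = w then k / sqrt (2 * k * dg w) else 0))"
      by (rule sum.cong) auto
    also have "\<dots> = (if E u w then k / sqrt (2 * k * dg w) else 0)"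
      using finV w by (subst sum.delta) auto
    finally show ?thesis by simp
  qed
  also have "\<dots> = (if E u w then 1 / (2 * sqrt (dg u) * sqrt (dg w)) else 0)"
  proof -
    have "real k > 0" using k by simp
    then have "sqrt (2 * k * dg w) * sqrt (2 * k * dg u) = 2 * k * (sqrt (dg u) * sqrt (dg w))"
      by (simp add: real_sqrt_mult algebra_simps)
    then show ?thesis using \<open>real k > 0\<close> by simp
  qed
  finally show ?thesis .
qed

end

context sgk
begin

definition Bm :: "real mat" where "Bm = mat nn (2*pp) (\<lambda>(i,j). NS (Orig (gl!i)) (ml!j))"
definition Cm :: "real mat" where "Cm = mat (2*pp) nn (\<lambda>(i,j). NS (ml!i) (Orig (gl!j)))"
definition Qm :: "real \<Rightarrow> real mat" where
  "Qm t = mat (2*pp) (2*pp) (\<lambda>(i,j). (if i = j then t else 0) + NS (ml!i) (ml!j))"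
definition hh :: "real \<Rightarrow> 'a \<Rightarrow> 'a sub_vertex \<Rightarrow> real" where
  "hh t w m = (t * NS m (Orig w) - 1/2 * NS (prt m) (Orig w)) / (t*t - 1/4)"
definition Xm :: "real \<Rightarrow> real mat" where "Xm t = mat (2*pp) nn (\<lambda>(a,j). hh t (gl!j) (ml!a))"

lemma sl_nth1: "i < nn \<Longrightarrow> sl ! i = Orig (gl ! i)" by (simp add: sl_def nth_append)
lemma sl_nth2: "a < 2*pp \<Longrightarrow> sl ! (nn + a) = ml ! a" by (simp add: sl_def nth_append)
lemma ml_Mids: "a < 2*pp \<Longrightarrow> ml ! a \<in> Mids" using ml by (metis nth_mem)

lemma charmat_block:
  "- char_matrix (nlap_mat sl SV SE) x = four_block_mat ((x - 1) \<cdot>\<^sub>m 1\<^sub>m nn) Bm Cm (Qm (x - 1))"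
proof (rule eq_matI)
  have dims: "dim_row (nlap_mat sl SV SE) = nn + 2*pp" "dim_col (nlap_mat sl SV SE) = nn + 2*pp"
    using sl by (auto simp: nlap_mat_def)
  show "dim_row (- char_matrix (nlap_mat sl SV SE) x) = dim_row (four_block_mat ((x - 1) \<cdot>\<^sub>m 1\<^sub>m nn) Bm Cm (Qm (x - 1)))"
    using dims by (simp add: char_matrix_def Qm_def)
  show "dim_col (- char_matrix (nlap_mat sl SV SE) x) = dim_col (four_block_mat ((x - 1) \<cdot>\<^sub>m 1\<^sub>m nn) Bm Cm (Qm (x - 1)))"
    using dims by (simp add: char_matrix_def Qm_def)
  fix i j assume "i < dim_row (four_block_mat ((x - 1) \<cdot>\<^sub>m 1\<^sub>m nn) Bm Cm (Qm (x - 1)))"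
    "j < dim_col (four_block_mat ((x - 1) \<cdot>\<^sub>m 1\<^sub>m nn) Bm Cm (Qm (x - 1)))"
  then have ij: "i < nn + 2*pp" "j < nn + 2*pp" by (auto simp: Qm_def)
  have L: "(- char_matrix (nlap_mat sl SV SE) x) $$ (i,j) = (x - 1) * (if i = j then 1 else 0) + NS (sl!i) (sl!j)"
    using ij dims sl by (simp add: char_matrix_def nlap_mat_def NS_def)
  show "(- char_matrix (nlap_mat sl SV SE) x) $$ (i,j) = four_block_mat ((x - 1) \<cdot>\<^sub>m 1\<^sub>m nn) Bm Cm (Qm (x - 1)) $$ (i,j)"
  proof (cases "i < nn")
    case True
    then show ?thesis
    proof (cases "j < nn")
      case True
      then show ?thesis using \<open>i < nn\<close> ij L by (simp add: Bm_def Cm_def Qm_def sl_nth1)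
    next
      case False
      then obtain b where b: "j = nn + b" "b < 2*pp" using ij by (metis add_diff_inverse_nat nat_add_left_cancel_less)
      then show ?thesis using \<open>i < nn\<close> ij L by (simp add: Bm_def Cm_def Qm_def sl_nth1 sl_nth2)
    qed
  next
    case False
    then obtain a where a: "i = nn + a" "a < 2*pp" using ij by (metis add_diff_inverse_nat nat_add_left_cancel_less)
    show ?thesis
    proof (cases "j < nn")
      case True
      then show ?thesis using a ij L by (simp add: Bm_def Cm_def Qm_def sl_nth1 sl_nth2)
    next
      case False
      then obtain b where b: "j = nn + b" "b < 2*pp" using ij by (metis add_diff_inverse_nat nat_add_left_cancel_less)
      then show ?thesis using a ij L by (simp add: Bm_def Cm_def Qm_def sl_nth1 sl_nth2)
    qed
  qed
qed

lemma QX: assumes D: "t * t \<noteq> 1/4" shows "Qm t * Xm t = Cm"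
proof (rule eq_matI)
  fix a j assume "a < dim_row Cm" "j < dim_col Cm"
  then have aj: "a < 2*pp" "j < nn" by (auto simp: Cm_def)
  define m where "m = ml ! a"
  define w where "w = gl ! j"
  have m: "m \<in> Mids" unfolding m_def using ml_Mids[OF aj(1)] .
  have "(Qm t * Xm t) $$ (a,j) = (\<Sum>b\<in>{0..<2*pp}. ((if a = b then t else 0) + NS m (ml!b)) * hh t w (ml!b))"
    using aj by (simp add: Qm_def Xm_def scalar_prod_def m_def w_def)
  also have "\<dots> = (\<Sum>b\<in>{0..<2*pp}. (if a = b then t * hh t w (ml!b) else 0)) + (\<Sum>b\<in>{0..<2*pp}. NS m (ml!b) * hh t w (ml!b))"
    by (simp add: sum.distrib[symmetric] distrib_right if_distrib[of "\<lambda>z. z * _"] cong: if_cong)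
  also have "(\<Sum>b\<in>{0..<2*pp}. (if a = b then t * hh t w (ml!b) else 0)) = t * hh t w m"
    using aj by (simp add: m_def)
  also have "(\<Sum>b\<in>{0..<2*pp}. NS m (ml!b) * hh t w (ml!b)) = (\<Sum>m'\<in>Mids. NS m m' * hh t w m')"
    using sum_nth_set[OF ml(1), of "\<lambda>m'. NS m m' * hh t w m'"] ml by simp
  also have "\<dots> = (\<Sum>m'\<in>Mids. if m' = prt m then 1/2 * hh t w m' else 0)"
    by (rule sum.cong) (auto simp: NS_MM[OF m])
  also have "\<dots> = 1/2 * hh t w (prt m)" using fin_Mids prt_Mids[OF m] by (subst sum.delta) auto
  also have "t * hh t w m + 1/2 * hh t w (prt m) = NS m (Orig w)"
  proof -
    have D': "t * t - 1/4 \<noteq> 0" using D by simp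
    define A where "A = NS m (Orig w)"
    define B where "B = NS (prt m) (Orig w)"
    define DD where "DD = t * t - 1/4"
    have "t * ((t * A - 1/2 * B) / DD) + 1/2 * ((t * B - 1/2 * A) / DD)
       = (t * (t * A - 1/2 * B) + 1/2 * (t * B - 1/2 * A)) / DD"
      by (simp add: add_divide_distrib)
    also have "t * (t * A - 1/2 * B) + 1/2 * (t * B - 1/2 * A) = A * DD"
      unfolding DD_def by (simp add: algebra_simps)
    finally have "t * ((t * A - 1/2 * B) / DD) + 1/2 * ((t * B - 1/2 * A) / DD) = A"
      using D' unfolding DD_def by simp
    then show ?thesis unfolding hh_def prt_prt A_def B_def DD_def .
  qed
  finally show "(Qm t * Xm t) $$ (a,j) = Cm $$ (a,j)" using aj by (simp add: Cm_def m_def w_def)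
qed (auto simp: Qm_def Xm_def Cm_def)

end

lemma alg_L3:
  fixes t x dl e :: real
  assumes D: "t * t \<noteq> 1/4" and x: "x = t + 1"
  shows "t * dl - (t * (dl/2) - 1/2 * (e / 2)) / (t * t - 1/4)
     = 1 / (4 * t * t - 1) * ((4*x^3 - 12*x^2 + 9*x) * dl - (dl - e))"
proof -
  have D1: "t * t - 1/4 \<noteq> 0" using D by simp
  have D3: "4 * t * t - 1 \<noteq> 0" using D by simp
  have key: "4*x^3 - 12*x^2 + 9*x = 4*t^3 - 3*t + 1" unfolding x by (simp add: algebra_simps power2_eq_square power3_eq_cube)
  have "t * dl - (t * (dl/2) - 1/2 * (e / 2)) / (t * t - 1/4) = (t * dl * (4 * t * t - 1) - (2 * t * dl - e)) / (4 * t * t - 1)"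
    using D1 D3 by (simp add: field_simps)
  also have "t * dl * (4 * t * t - 1) - (2 * t * dl - e) = (4*t^3 - 3*t + 1) * dl - (dl - e)"
    by (simp add: algebra_simps power3_eq_cube)
  also have "((4*t^3 - 3*t + 1) * dl - (dl - e)) / (4 * t * t - 1) = 1 / (4 * t * t - 1) * ((4*t^3 - 3*t + 1) * dl - (dl - e))"
    by simp
  finally show ?thesis unfolding key .
qed
lemma smult_one_mult: "((a::real) \<cdot>\<^sub>m 1\<^sub>m n) * (b \<cdot>\<^sub>m 1\<^sub>m n) = (a * b) \<cdot>\<^sub>m 1\<^sub>m n"
proof -
  have "(a \<cdot>\<^sub>m 1\<^sub>m n) * (b \<cdot>\<^sub>m 1\<^sub>m n) = a \<cdot>\<^sub>m (1\<^sub>m n * (b \<cdot>\<^sub>m 1\<^sub>m n))"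
    by (rule mult_smult_assoc_mat) auto
  also have "1\<^sub>m n * (b \<cdot>\<^sub>m 1\<^sub>m n) = b \<cdot>\<^sub>m (1\<^sub>m n :: real mat)" by simp
  finally show ?thesis by (auto intro!: eq_matI)
qed

context sgk
begin

lemma BX: assumes D: "t * t \<noteq> 1/4" and x: "x = t + 1"
  shows "t \<cdot>\<^sub>m 1\<^sub>m nn - Bm * Xm t = (1 / (4*t*t - 1)) \<cdot>\<^sub>m (- char_matrix (nlap V E) (poly Fp x))"
proof (rule eq_matI)
  fix i j assume "i < dim_row ((1 / (4*t*t - 1)) \<cdot>\<^sub>m (- char_matrix (nlap V E) (poly Fp x)))"
    "j < dim_col ((1 / (4*t*t - 1)) \<cdot>\<^sub>m (- char_matrix (nlap V E) (poly Fp x)))"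
  then have ij: "i < nn" "j < nn" using nlap_carrier' by (auto simp: char_matrix_def)
  define u where "u = gl ! i"
  define w where "w = gl ! j"
  have uw: "u \<in> V" "w \<in> V" using gl_nth_V ij unfolding u_def w_def by auto
  have uw_eq: "(u = w) = (i = j)" unfolding u_def w_def using gl(1) ij by (simp add: nth_eq_iff_index_eq)
  have "(Bm * Xm t) $$ (i,j) = (\<Sum>a\<in>{0..<2*pp}. NS (Orig u) (ml!a) * hh t w (ml!a))"
    using ij by (simp add: Bm_def Xm_def scalar_prod_def u_def w_def)
  also have "\<dots> = (\<Sum>m\<in>Mids. NS (Orig u) m * hh t w m)"
    using sum_nth_set[OF ml(1), of "\<lambda>m. NS (Orig u) m * hh t w m"] ml by simp
  also have "\<dots> = (t * (\<Sum>m\<in>Mids. NS (Orig u) m * NS m (Orig w))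
      - 1/2 * (\<Sum>m\<in>Mids. NS (Orig u) m * NS (prt m) (Orig w))) / (t * t - 1/4)"
  proof -
    have "(\<Sum>m\<in>Mids. NS (Orig u) m * hh t w m) = (\<Sum>m\<in>Mids. (t * (NS (Orig u) m * NS m (Orig w))
      - 1/2 * (NS (Orig u) m * NS (prt m) (Orig w))) / (t * t - 1/4))"
      unfolding hh_def by (rule sum.cong) (simp_all add: algebra_simps)
    also have "\<dots> = (\<Sum>m\<in>Mids. t * (NS (Orig u) m * NS m (Orig w))
      - 1/2 * (NS (Orig u) m * NS (prt m) (Orig w))) / (t * t - 1/4)"
      by (rule sum_divide_distrib[symmetric])
    also have "(\<Sum>m\<in>Mids. t * (NS (Orig u) m * NS m (Orig w)) - 1/2 * (NS (Orig u) m * NS (prt m) (Orig w)))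
      = t * (\<Sum>m\<in>Mids. NS (Orig u) m * NS m (Orig w)) - 1/2 * (\<Sum>m\<in>Mids. NS (Orig u) m * NS (prt m) (Orig w))"
      by (simp add: sum_subtractf sum_distrib_left)
    finally show ?thesis .
  qed
  also have "\<dots> = (t * (if u = w then 1/2 else 0) - 1/2 * (if E u w then 1 / (2 * sqrt (dg u) * sqrt (dg w)) else 0)) / (t * t - 1/4)"
    unfolding SumA[OF uw] SumB[OF uw] ..
  finally have BXe: "(Bm * Xm t) $$ (i,j) = \<dots>" .
  have Le: "(- char_matrix (nlap V E) (poly Fp x)) $$ (i,j) = poly Fp x * (if i = j then 1 else 0)
      - ((if i = j then 1 else 0) - (if E u w then 1 / (sqrt (dg u) * sqrt (dg w)) else 0))"
    using ij nlap_carrier' by (simp add: char_matrix_def nlap_entry u_def w_def)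
  define dl :: real where "dl = (if i = j then 1 else 0)"
  define e :: real where "e = (if E u w then 1 / (sqrt (dg u) * sqrt (dg w)) else 0)"
  have e1: "(t * (if u = w then 1/2 else 0) - 1/2 * (if E u w then 1 / (2 * sqrt (dg u) * sqrt (dg w)) else 0))
      = t * (dl/2) - 1/2 * (e/2)"
    unfolding dl_def e_def uw_eq by auto
  have "(t \<cdot>\<^sub>m 1\<^sub>m nn - Bm * Xm t) $$ (i,j) = t * dl - (Bm * Xm t) $$ (i,j)"
    using ij by (simp add: Bm_def Xm_def dl_def)
  also have "\<dots> = t * dl - (t * (dl/2) - 1/2 * (e / 2)) / (t * t - 1/4)" unfolding BXe e1 ..
  also have "\<dots> = 1 / (4 * t * t - 1) * ((4*x^3 - 12*x^2 + 9*x) * dl - (dl - e))"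
    by (rule alg_L3[OF D x])
  also have "\<dots> = ((1 / (4*t*t - 1)) \<cdot>\<^sub>m (- char_matrix (nlap V E) (poly Fp x))) $$ (i,j)"
    using ij nlap_carrier' Le by (simp add: char_matrix_def poly_Fp dl_def e_def)
  finally show "(t \<cdot>\<^sub>m 1\<^sub>m nn - Bm * Xm t) $$ (i,j) = ((1 / (4*t*t - 1)) \<cdot>\<^sub>m (- char_matrix (nlap V E) (poly Fp x))) $$ (i,j)" .
qed (use nlap_carrier' in \<open>auto simp: char_matrix_def Bm_def Xm_def\<close>)

lemma ml_prt_iff: assumes a: "a < 2*pp" and b: "b < 2*pp"
  shows "ml ! b = prt (ml ! a) \<longleftrightarrow> b = (if a < pp then a + pp else a - pp)"
proof -
  define c where "c = (if a < pp then a + pp else a - pp)"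
  have c: "c < 2*pp" using a unfolding c_def by auto
  have "prt (ml ! a) = ml ! c"
    using a unfolding c_def ml_def by (auto simp: nth_append)
  then show ?thesis using ml(1,3) b c unfolding c_def[symmetric] by (simp add: nth_eq_iff_index_eq)
qed

lemma Q_block: "Qm t = four_block_mat (t \<cdot>\<^sub>m 1\<^sub>m pp) ((1/2) \<cdot>\<^sub>m 1\<^sub>m pp) ((1/2) \<cdot>\<^sub>m 1\<^sub>m pp) (t \<cdot>\<^sub>m 1\<^sub>m pp)"
proof (rule eq_matI)
  fix a b assume "a < dim_row (four_block_mat (t \<cdot>\<^sub>m 1\<^sub>m pp) ((1/2) \<cdot>\<^sub>m 1\<^sub>m pp) ((1/2) \<cdot>\<^sub>m 1\<^sub>m pp) (t \<cdot>\<^sub>m 1\<^sub>m pp))"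
    "b < dim_col (four_block_mat (t \<cdot>\<^sub>m 1\<^sub>m pp) ((1/2) \<cdot>\<^sub>m 1\<^sub>m pp) ((1/2) \<cdot>\<^sub>m 1\<^sub>m pp) (t \<cdot>\<^sub>m 1\<^sub>m pp))"
  then have ab: "a < 2*pp" "b < 2*pp" by auto
  have "NS (ml!a) (ml!b) = (if b = (if a < pp then a + pp else a - pp) then 1/2 else 0)"
    using NS_MM[OF ml_Mids[OF ab(1)] ml_Mids[OF ab(2)]] ml_prt_iff[OF ab] by simp
  then show "Qm t $$ (a,b) = four_block_mat (t \<cdot>\<^sub>m 1\<^sub>m pp) ((1/2) \<cdot>\<^sub>m 1\<^sub>m pp) ((1/2) \<cdot>\<^sub>m 1\<^sub>m pp) (t \<cdot>\<^sub>m 1\<^sub>m pp) $$ (a,b)"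
    using ab by (auto simp: Qm_def)
qed (auto simp: Qm_def)

lemma det_Q: "det (Qm t) = (t * t - 1/4) ^ pp"
proof -
  have c: "(1/2) \<cdot>\<^sub>m 1\<^sub>m pp * (t \<cdot>\<^sub>m 1\<^sub>m pp) = t \<cdot>\<^sub>m 1\<^sub>m pp * ((1/2) \<cdot>\<^sub>m (1\<^sub>m pp :: real mat))"
    unfolding smult_one_mult by (simp add: mult.commute)
  have "det (Qm t) = det (t \<cdot>\<^sub>m 1\<^sub>m pp * (t \<cdot>\<^sub>m 1\<^sub>m pp) - (1/2) \<cdot>\<^sub>m 1\<^sub>m pp * ((1/2) \<cdot>\<^sub>m 1\<^sub>m pp))"
    unfolding Q_block by (rule det_four_block_mat[OF _ _ _ _ c]) auto
  also have "t \<cdot>\<^sub>m 1\<^sub>m pp * (t \<cdot>\<^sub>m 1\<^sub>m pp) - (1/2) \<cdot>\<^sub>m 1\<^sub>m pp * ((1/2) \<cdot>\<^sub>m 1\<^sub>m pp) = (t * t - 1/4) \<cdot>\<^sub>m (1\<^sub>m pp :: real mat)"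
    unfolding smult_one_mult by (rule eq_matI) auto
  also have "det \<dots> = (t * t - 1/4) ^ pp" by simp
  finally show ?thesis .
qed

end

lemma poly_eq_cofinite:
  fixes p q :: "real poly"
  assumes "\<And>x. x \<noteq> a \<Longrightarrow> x \<noteq> b \<Longrightarrow> poly p x = poly q x"
  shows "p = q"
proof (rule ccontr)
  assume "p \<noteq> q"
  then have "p - q \<noteq> 0" by simp
  then have fin: "finite {x. poly (p - q) x = 0}" by (rule poly_roots_finite)
  have "UNIV - {a, b} \<subseteq> {x. poly (p - q) x = 0}" using assms by auto
  then have "finite (UNIV - {a, b} :: real set)" using fin by (rule finite_subset)
  then have "finite (UNIV :: real set)" by simp
  then show False by (simp add: infinite_UNIV_char_0)
qed

context sgk
begin

lemma nlap_sl_carrier: "nlap_mat sl SV SE \<in> carrier_mat (nn + 2*pp) (nn + 2*pp)"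
  using sl by (simp add: nlap_mat_def)

lemma poly_S_point:
  assumes D: "t * t \<noteq> 1/4" and x: "x = t + 1"
  shows "poly (char_poly (nlap_mat sl SV SE)) x
    = (t * t - 1/4)^pp * (1 / (4*t*t - 1))^nn * poly (char_poly (nlap V E)) (poly Fp x)"
proof -
  have t: "x - 1 = t" using x by simp
  have Bm: "Bm \<in> carrier_mat nn (2*pp)" by (simp add: Bm_def)
  have Cm: "Cm \<in> carrier_mat (2*pp) nn" by (simp add: Cm_def)
  have Qm: "Qm t \<in> carrier_mat (2*pp) (2*pp)" by (simp add: Qm_def)
  have Xm: "Xm t \<in> carrier_mat (2*pp) nn" by (simp add: Xm_def)
  have "poly (char_poly (nlap_mat sl SV SE)) x = det (- char_matrix (nlap_mat sl SV SE) x)"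
    by (rule char_poly_matrix[OF nlap_sl_carrier])
  also have "\<dots> = det (four_block_mat (t \<cdot>\<^sub>m 1\<^sub>m nn) Bm Cm (Qm t))"
    unfolding charmat_block t ..
  also have "\<dots> = det (Qm t) * det (t \<cdot>\<^sub>m 1\<^sub>m nn - Bm * Xm t)"
    by (rule schur_det[OF _ Bm Cm Qm Xm QX[OF D]]) simp
  also have "\<dots> = (t * t - 1/4)^pp * det ((1 / (4*t*t - 1)) \<cdot>\<^sub>m (- char_matrix (nlap V E) (poly Fp x)))"
    unfolding det_Q BX[OF D x] ..
  also have "det ((1 / (4*t*t - 1)) \<cdot>\<^sub>m (- char_matrix (nlap V E) (poly Fp x)))
      = (1 / (4*t*t - 1))^nn * det (- char_matrix (nlap V E) (poly Fp x))"
    using nlap_carrier' by (simp add: char_matrix_def)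
  also have "det (- char_matrix (nlap V E) (poly Fp x)) = poly (char_poly (nlap V E)) (poly Fp x)"
    by (rule char_poly_matrix[OF nlap_carrier', symmetric])
  finally show ?thesis by simp
qed

lemma S_id_sgk:
  "Polynomial.smult (4^pp) (char_poly (nlap SV SE)) * Dp^nn = Dp^pp * pcompose (char_poly (nlap V E)) Fp"
proof -
  have finSV: "finite SV" using sl(2) by (metis List.finite_set)
  have cS: "char_poly (nlap SV SE) = char_poly (nlap_mat sl SV SE)"
    unfolding nlap_def
    by (rule nlap_mat_perm) (use vertex_list_props[OF finSV] sl in auto)
  show ?thesis
  proof (rule poly_eq_cofinite[of "1/2" "3/2"])
    fix x :: real assume x1: "x \<noteq> 1/2" and x3: "x \<noteq> 3/2"
    define t where "t = x - 1"
    have x: "x = t + 1" unfolding t_def by simp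
    have D: "t * t \<noteq> 1/4"
    proof
      assume "t * t = 1/4"
      then have "(t - 1/2) * (t + 1/2) = 0" by (simp add: algebra_simps)
      then have "t = 1/2 \<or> t = -1/2" by auto
      then show False using x1 x3 unfolding t_def by auto
    qed
    have Dpx: "poly Dp x = 4*t*t - 1" unfolding poly_Dp x by (simp add: algebra_simps)
    have nz: "4*t*t - 1 \<noteq> 0" using D by simp
    have "poly (Polynomial.smult (4^pp) (char_poly (nlap SV SE)) * Dp^nn) x
      = 4^pp * ((t * t - 1/4)^pp * (1 / (4*t*t - 1))^nn * poly (char_poly (nlap V E)) (poly Fp x)) * (4*t*t - 1)^nn"
      unfolding cS using poly_S_point[OF D x] Dpx by simp
    also have "\<dots> = (4 * (t * t - 1/4))^pp * ((1 / (4*t*t - 1)) * (4*t*t - 1))^nn * poly (char_poly (nlap V E)) (poly Fp x)"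
      by (simp only: power_mult_distrib mult_ac)
    also have "\<dots> = (4*t*t - 1)^pp * poly (char_poly (nlap V E)) (poly Fp x)"
    proof -
      have h1: "(1 / (4*t*t - 1)) * (4*t*t - 1) = 1" using nz by simp
      have h2: "4 * (t*t - 1/4) = 4*t*t - 1" by simp
      show ?thesis unfolding h1 h2 by simp
    qed
    also have "\<dots> = poly (Dp^pp * pcompose (char_poly (nlap V E)) Fp) x"
      using Dpx by (simp add: poly_pcompose)
    finally show "poly (Polynomial.smult (4^pp) (char_poly (nlap SV SE)) * Dp^nn) x = poly (Dp^pp * pcompose (char_poly (nlap V E)) Fp) x" .
  qed
qed

end

lemma nlap_carrier: "nlap V E \<in> carrier_mat (length (vertex_list V)) (length (vertex_list V))"
  by (simp add: nlap_def nlap_mat_def)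

lemma char_poly_nz: "char_poly (nlap V E) \<noteq> (0::real poly)"
proof -
  have "coeff (char_poly (nlap V E)) (length (vertex_list V)) = 1"
    using degree_monic_char_poly[OF nlap_carrier] by blast
  then show ?thesis by auto
qed

lemma G_orders_top:
  assumes G: "simple_graph V E" and conn: "connected_graph V E" and two: "card V \<ge> 2"
  shows "Polynomial.order 0 (char_poly (nlap V E)) = 1"
    "bipartite V E \<Longrightarrow> Polynomial.order 2 (char_poly (nlap V E)) = 1"
    "\<not> bipartite V E \<Longrightarrow> Polynomial.order 2 (char_poly (nlap V E)) = 0"
proof -
  interpret sgraph V E by (unfold_locales) (rule G conn two)+
  show "Polynomial.order 0 (char_poly (nlap V E)) = 1"
    "bipartite V E \<Longrightarrow> Polynomial.order 2 (char_poly (nlap V E)) = 1"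
    "\<not> bipartite V E \<Longrightarrow> Polynomial.order 2 (char_poly (nlap V E)) = 0"
    by (rule G_orders; assumption)+
qed

lemma S_identity_top:
  assumes G: "simple_graph V E" and conn: "connected_graph V E" and two: "card V \<ge> 2"
    and k: "k \<ge> 1"
  shows "Polynomial.smult (4^(k*num_edges E)) (char_poly (nlap (sub_vertices k V E) (sub_edge k E))) * Dp^(card V)
    = Dp^(k*num_edges E) * pcompose (char_poly (nlap V E)) Fp"
proof -
  interpret sgk V E k by (unfold_locales) (rule G conn two k)+
  show ?thesis using S_id_sgk pp_card nn_card by simp
qed

lemma key_orders:
  fixes cS cG :: "real poly"
  assumes id: "Polynomial.smult c cS * Dp^n = Dp^p * pcompose cG Fp" and c: "c \<noteq> 0"
    and cS: "cS \<noteq> 0" and cG: "cG \<noteq> 0"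
  shows "Polynomial.order x cS + n * Polynomial.order x Dp = p * Polynomial.order x Dp + Polynomial.order (poly Fp x) cG * Polynomial.order x (Fp - [:poly Fp x:])"
proof -
  have l: "Polynomial.smult c cS * Dp^n \<noteq> 0" using c cS Dp0 by auto
  have "Polynomial.order x (Polynomial.smult c cS * Dp^n) = Polynomial.order x cS + n * Polynomial.order x Dp"
    using l Dp0 by (simp add: order_mult order_smult[OF c] order_power_gen)
  moreover have "Polynomial.order x (Dp^p * pcompose cG Fp) = p * Polynomial.order x Dp + Polynomial.order (poly Fp x) cG * Polynomial.order x (Fp - [:poly Fp x:])"
    using l[unfolded id] Dp0 cG deg_Fp by (simp add: order_mult order_power_gen order_pcompose)
  ultimately show ?thesis using id by simp
qed

theorem theorem1p2:
  fixes V :: "'a set" and E :: "'a \<Rightarrow> 'a \<Rightarrow> bool" and k :: nat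
  assumes G: "simple_graph V E"
    and conn: "connected_graph V E"
    and two: "card V \<ge> 2"
    and k: "k \<ge> 1"
  defines "n \<equiv> card V" and "m \<equiv> num_edges E"
    and "SV \<equiv> sub_vertices k V E" and "SE \<equiv> sub_edge k E"
  shows
    "(\<forall>(lam::real) (mu::real). nlap_mult V E lam > 0 \<and> lam \<noteq> 0 \<and> lam \<noteq> 2
        \<and> 4 * mu^3 - 12 * mu^2 + 9 * mu - lam = 0
        \<longrightarrow> nlap_mult SV SE mu = nlap_mult V E lam)
     \<and> nlap_mult SV SE 0 = 1
     \<and> (bipartite V E \<longrightarrow> nlap_mult SV SE 2 = 1)
     \<and> (\<not> bipartite V E \<longrightarrow>
          int (nlap_mult SV SE (1/2)) = int k * int m - int n
        \<and> int (nlap_mult SV SE (3/2)) = int k * int m - int n + 2)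
     \<and> (bipartite V E \<longrightarrow>
          int (nlap_mult SV SE (1/2)) = int k * int m - int n + 2
        \<and> int (nlap_mult SV SE (3/2)) = int k * int m - int n + 2)"
proof -
  define cS where "cS = char_poly (nlap SV SE)"
  define cG where "cG = char_poly (nlap V E)"
  have K: "\<And>x. Polynomial.order x cS + n * Polynomial.order x Dp = (k*m) * Polynomial.order x Dp + Polynomial.order (poly Fp x) cG * Polynomial.order x (Fp - [:poly Fp x:])"
  proof -
    fix x
    have id: "Polynomial.smult (4^(k*m)) cS * Dp^n = Dp^(k*m) * pcompose cG Fp"
      using S_identity_top[OF G conn two k] by (simp add: cS_def cG_def SV_def SE_def m_def n_def)
    show "Polynomial.order x cS + n * Polynomial.order x Dp = (k*m) * Polynomial.order x Dp + Polynomial.order (poly Fp x) cG * Polynomial.order x (Fp - [:poly Fp x:])"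
      by (rule key_orders[OF id]) (auto simp: cS_def cG_def char_poly_nz)
  qed
  have MS: "nlap_mult SV SE x = Polynomial.order x cS" for x by (simp add: nlap_mult_def cS_def)
  have MG: "nlap_mult V E x = Polynomial.order x cG" for x by (simp add: nlap_mult_def cG_def)
  note GO = G_orders_top[OF G conn two, folded cG_def]
  have P1: "nlap_mult SV SE mu = nlap_mult V E lam"
    if "lam \<noteq> 0" "lam \<noteq> 2" "4 * mu^3 - 12 * mu^2 + 9 * mu - lam = 0" for lam mu :: real
  proof -
    have lv: "poly Fp mu = lam" using that(3) by (simp add: poly_Fp)
    have "mu \<noteq> 1/2" proof assume "mu = 1/2" then show False using that(2) Fp_vals(1) lv by metis qed
    moreover have "mu \<noteq> 3/2" proof assume "mu = 3/2" then show False using that(1) Fp_vals(2) lv by metis qed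
    ultimately
    show ?thesis using K[of mu] order_F_generic[of mu] lv
      by (simp add: MS MG order_Dp)
  qed
  have P0: "nlap_mult SV SE 0 = 1"
    using K[of 0] order_F_generic[of 0] Fp_vals GO(1) by (simp add: MS order_Dp)
  have P2: "nlap_mult SV SE 2 = 1" if "bipartite V E"
    using K[of 2] order_F_generic[of 2] Fp_vals GO(2)[OF that] by (simp add: MS order_Dp)
  have Ph: "int (nlap_mult SV SE (1/2)) = int k * int m - int n + 2 * int (Polynomial.order 2 cG)"
    using arg_cong[OF K[of "1/2"], of int] order_F_half Fp_vals by (simp add: MS order_Dp)
  have P3h: "int (nlap_mult SV SE (3/2)) = int k * int m - int n + 2"
    using arg_cong[OF K[of "3/2"], of int] order_F_3half Fp_vals GO(1) by (simp add: MS order_Dp)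
  show ?thesis
    using P1 P0 P2 Ph P3h GO(2,3) by auto
qed


end
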